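(* Let $L$ be a finite-dimensional real vector space with the structures described in the context ($[\cdot,\cdot]$, $\omega$, $M$, $N$, $Q$, $q$, $J$, $g$, $\{\cdot,\cdot\}$, $j$, $\mu_Q$, $\mu_L$, $\nu_L$, $\alpha$, $B$, $\mathcal{H}^{\mathrm{S}}$, $\mathcal{H}^{\mathrm{H}}$, $K^{\mathrm{H}}_\tau$, $\mathcal{H}^{\mathrm{H,c}}$). Then there exist a linear subspace $\mathcal{H}^{\mathrm{S,c}}\subseteq\mathcal{H}^{\mathrm{S}}$ and an isometric linear isomorphism $\mathcal{B}:\mathcal{H}^{\mathrm{S,c}}\to\mathcal{H}^{\mathrm{H,c}}$ such that \begin{align*} (\mathcal{B}\psi)(\xi)&=\int_Q \psi(\phi)\,B(\xi,\phi)\,\mathrm{d}\mu_Q(\phi) &&\forall\psi\in\mathcal{H}^{\mathrm{S,c}},\\ (\mathcal{B}^{-1}\psi)(\phi)&=\int_L \psi(\xi)\,\overline{B(\xi,\phi)}\,\mathrm{d}\nu_L(\xi) &&\forall\psi\in\mathcal{H}^{\mathrm{H,c}},\\ \langle\psi',\mathcal{B}\psi\rangle^{\mathrm{H}}&=\int_L\overline{\psi'(\xi)}\,\psi(q(\xi))\,\overline{\alpha(\xi)}\,\mathrm{d}\mu_L(\xi) &&\forall\psi'\in\mathcal{H}^{\mathrm{H,c}},\ \forall\psi\in\mathcal{H}^{\mathrm{S,c}},\\ \langle\psi',\mathcal{B}^{-1}\psi\rangle^{\mathrm{S}}&=\int_L\overline{\psi'(q(\xi))}\,\psi(\xi)\,\alpha(\xi)\,\mathrm{d}\mu_L(\xi)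 &&\forall\psi'\in\mathcal{H}^{\mathrm{S,c}},\ \forall\psi\in\mathcal{H}^{\mathrm{H,c}}. \end{align*} Moreover, for every $\tau\in L$, $(\mathcal{B}^{-1}K^{\mathrm{H}}_\tau)(\phi)=\overline{B(\tau,\phi)}$ for all $\phi\in Q$.
   Context: $L$ is a finite-dimensional real vector space and $[\cdot,\cdot]:L\times L\to\mathbb{R}$ is a bilinear form such that $\omega(\xi,\xi')=\frac12[\xi,\xi']-\frac12[\xi',\xi]$ is non-degenerate. Set $M=\{\tau\in L:[\xi,\tau]=0\ \forall\xi\in L\}$ and $N=\{\tau\in L:[\tau,\xi]=0\ \forall\xi\in L\}$, and assume $L=M\oplus N$. Let $Q=L/M$ with quotient map $q:L\to Q$; $[\cdot,\cdot]$ descends to a map $L\times Q\to\mathbb{R}$, still denoted $[\cdot,\cdot]$. $J:L\to L$ is a linear map with $J^2=-\mathrm{id}$ and $\omega(J\cdot,J\cdot)=\omega$, such that $g(\tau,\xi):=2\omega(\tau,J\xi)$ is positive definite; $\{\tau,\xi\}:=g(\tau,\xi)+2\mathrm{i}\,\omega(\tau,\xi)$ (a complex inner product on $L$, with multiplication by $\mathrm{i}$ given by $J$). $Q$ carries the quotient norm induced by $g$, and $j:Q\to L$ is the unique linear map with $q\circ j=\mathrm{id}_Q$ and $j(Q)\subseteq JM$. $\mu_Q$ is the Lebesgue measure on $Q$ normalized by $\int_Q\exp(-g(j(\phi),j(\phi)))\,\mathrm{d}\mu_Q(\phi)=1$, and $\mathcal{H}^{\mathrm{S}}=\mathrm{L}^2(Q,\mu_Q)$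 with inner product $\langle\cdot,\cdot\rangle^{\mathrm{S}}$ (antilinear in the first argument). $\mu_L$ is the Lebesgue measure on $L$ normalized by $\int_L\exp(-\frac12 g(\xi,\xi))\,\mathrm{d}\mu_L(\xi)=1$, $\mathrm{d}\nu_L:=\exp(-\frac12 g(\xi,\xi))\,\mathrm{d}\mu_L$, and $\mathcal{H}^{\mathrm{H}}$ is the Hilbert space of functions on $L$ that are holomorphic (with respect to the complex structure $J$) and square-integrable with respect to $\nu_L$, with inner product $\langle\cdot,\cdot\rangle^{\mathrm{H}}$. For $\tau\in L$, $K^{\mathrm{H}}_\tau(\xi)=\exp(\frac12\{\tau,\xi\})$, and $\mathcal{H}^{\mathrm{H,c}}$ is the linear span of $\{K^{\mathrm{H}}_\tau:\tau\in L\}$. Further, $\alpha(\xi)=\exp(\frac{\mathrm{i}}{2}[\xi,\xi]-\frac14 g(\xi,\xi))$ and $B:L\times Q\to\mathbb{C}$ is $$B(\xi,\phi)=\exp\Big(\{j(\phi),\xi\}-\tfrac{\mathrm{i}}{2}[j(\phi),j(\phi)]-\tfrac12 g(j(\phi),j(\phi))+\tfrac14 g(\xi,\xi)-\tfrac12\{j(q(\xi)),\xi\}\Big).$$ *)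

theory Defs
  imports "HOL-Analysis.Analysis"
begin

definition omega :: "('l \<Rightarrow> 'l \<Rightarrow> real) \<Rightarrow> 'l \<Rightarrow> 'l \<Rightarrow> real" where
  "omega br x y = br x y / 2 - br y x / 2"

definition Mspace :: "('l \<Rightarrow> 'l \<Rightarrow> real) \<Rightarrow> 'l set" where
  "Mspace br = {\<tau>. \<forall>\<xi>. br \<xi> \<tau> = 0}"

definition Nspace :: "('l \<Rightarrow> 'l \<Rightarrow> real) \<Rightarrow> 'l set" where
  "Nspace br = {\<tau>. \<forall>\<xi>. br \<tau> \<xi> = 0}"

definition gform :: "('l \<Rightarrow> 'l \<Rightarrow> real) \<Rightarrow> ('l \<Rightarrow> 'l) \<Rightarrow> 'l \<Rightarrow> 'l \<Rightarrow> real" where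
  "gform br J x y = 2 * omega br x (J y)"

definition cinner :: "('l \<Rightarrow> 'l \<Rightarrow> real) \<Rightarrow> ('l \<Rightarrow> 'l) \<Rightarrow> 'l \<Rightarrow> 'l \<Rightarrow> complex" where
  "cinner br J x y = complex_of_real (gform br J x y) + 2 * \<i> * complex_of_real (omega br x y)"

definition muL :: "('l::euclidean_space \<Rightarrow> 'l \<Rightarrow> real) \<Rightarrow> ('l \<Rightarrow> 'l) \<Rightarrow> 'l measure" where
  "muL br J = density lborel
     (\<lambda>_. ennreal (1 / integral\<^sup>L lborel (\<lambda>\<xi>. exp (- gform br J \<xi> \<xi> / 2))))"

definition nuL :: "('l::euclidean_space \<Rightarrow> 'l \<Rightarrow> real) \<Rightarrow> ('l \<Rightarrow> 'l) \<Rightarrow> 'l measure" where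
  "nuL br J = density (muL br J) (\<lambda>\<xi>. ennreal (exp (- gform br J \<xi> \<xi> / 2)))"

text \<open>Normalised Lebesgue measure on Q (Q is modelled by a euclidean space 'q together with a
  linear surjection q : L \<rightarrow> Q with kernel M; j is the section with range in JM).\<close>
definition muQ :: "('l \<Rightarrow> 'l \<Rightarrow> real) \<Rightarrow> ('l \<Rightarrow> 'l) \<Rightarrow> ('q::euclidean_space \<Rightarrow> 'l) \<Rightarrow> 'q measure" where
  "muQ br J j = density lborel
     (\<lambda>_. ennreal (1 / integral\<^sup>L lborel (\<lambda>\<phi>. exp (- gform br J (j \<phi>) (j \<phi>)))))"

definition alpha :: "('l \<Rightarrow> 'l \<Rightarrow> real) \<Rightarrow> ('l \<Rightarrow> 'l) \<Rightarrow> 'l \<Rightarrow> complex" where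
  "alpha br J \<xi> = exp (\<i> / 2 * complex_of_real (br \<xi> \<xi>) - complex_of_real (gform br J \<xi> \<xi> / 4))"

definition Bkern :: "('l \<Rightarrow> 'l \<Rightarrow> real) \<Rightarrow> ('l \<Rightarrow> 'l) \<Rightarrow> ('l \<Rightarrow> 'q) \<Rightarrow> ('q \<Rightarrow> 'l)
    \<Rightarrow> 'l \<Rightarrow> 'q \<Rightarrow> complex" where
  "Bkern br J q j \<xi> \<phi> = exp (cinner br J (j \<phi>) \<xi>
      - \<i> / 2 * complex_of_real (br (j \<phi>) (j \<phi>))
      - complex_of_real (gform br J (j \<phi>) (j \<phi>) / 2)
      + complex_of_real (gform br J \<xi> \<xi> / 4)
      - cinner br J (j (q \<xi>)) \<xi> / 2)"

definition KH :: "('l \<Rightarrow> 'l \<Rightarrow> real) \<Rightarrow> ('l \<Rightarrow> 'l) \<Rightarrow> 'l \<Rightarrow> 'l \<Rightarrow> complex" where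
  "KH br J \<tau> \<xi> = exp (cinner br J \<tau> \<xi> / 2)"

definition HHc :: "('l \<Rightarrow> 'l \<Rightarrow> real) \<Rightarrow> ('l \<Rightarrow> 'l) \<Rightarrow> ('l \<Rightarrow> complex) set" where
  "HHc br J = {f. \<exists>S c. finite S \<and> f = (\<lambda>\<xi>. \<Sum>\<tau>\<in>S. c \<tau> * KH br J \<tau> \<xi>)}"

definition innerH :: "('l::euclidean_space \<Rightarrow> 'l \<Rightarrow> real) \<Rightarrow> ('l \<Rightarrow> 'l) \<Rightarrow> ('l \<Rightarrow> complex) \<Rightarrow> ('l \<Rightarrow> complex) \<Rightarrow> complex" where
  "innerH br J f g = integral\<^sup>L (nuL br J) (\<lambda>\<xi>. cnj (f \<xi>) * g \<xi>)"

definition innerS :: "('l \<Rightarrow> 'l \<Rightarrow> real) \<Rightarrow> ('l \<Rightarrow> 'l) \<Rightarrow> ('q::euclidean_space \<Rightarrow> 'l) \<Rightarrow> ('q \<Rightarrow> complex) \<Rightarrow> ('q \<Rightarrow> complex) \<Rightarrow> complex" where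
  "innerS br J j f g = integral\<^sup>L (muQ br J j) (\<lambda>\<phi>. cnj (f \<phi>) * g \<phi>)"

text \<open>Square-integrable functions on Q (elements of \<open>L^2(Q,\<mu>_Q)\<close>, as representatives).\<close>
definition L2Q :: "('l \<Rightarrow> 'l \<Rightarrow> real) \<Rightarrow> ('l \<Rightarrow> 'l) \<Rightarrow> ('q::euclidean_space \<Rightarrow> 'l) \<Rightarrow> ('q \<Rightarrow> complex) set" where
  "L2Q br J j = {f. f \<in> borel_measurable (muQ br J j) \<and> integrable (muQ br J j) (\<lambda>\<phi>. (cmod (f \<phi>))\<^sup>2)}"

definition csubspace_fun :: "('a \<Rightarrow> complex) set \<Rightarrow> bool" where
  "csubspace_fun S \<longleftrightarrow> (\<lambda>_. 0) \<in> S \<and>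
     (\<forall>f\<in>S. \<forall>g\<in>S. \<forall>a::complex. (\<lambda>x. a * f x + g x) \<in> S)"

end

theory Submission
  imports Defs "HOL-Probability.Probability"
begin


lemma std_char_lborel:
  fixes v :: real
  shows "integrable lborel (\<lambda>x. complex_of_real (exp (- x\<^sup>2 / 2)) * exp (\<i> * complex_of_real (v * x)))"
    and "(\<integral>x. complex_of_real (exp (- x\<^sup>2 / 2)) * exp (\<i> * complex_of_real (v * x)) \<partial>lborel)
         = complex_of_real (sqrt (2*pi) * exp (- v\<^sup>2 / 2))"
proof -
  interpret P: real_distribution std_normal_distribution by (rule real_dist_normal_dist)
  have m: "(\<lambda>x. exp (\<i> * complex_of_real (v * x))) \<in> borel_measurable borel" by measurable
  have i1: "integrable std_normal_distribution (\<lambda>x. exp (\<i> * complex_of_real (v * x)))"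
    by (rule P.integrable_iexp) auto
  then have i2: "integrable lborel (\<lambda>x. std_normal_density x *\<^sub>R exp (\<i> * complex_of_real (v * x)))"
    by (subst (asm) integrable_density) auto
  have eqf: "(\<lambda>x. complex_of_real (exp (- x\<^sup>2 / 2)) * exp (\<i> * complex_of_real (v * x)))
     = (\<lambda>x. complex_of_real (sqrt (2*pi)) * (std_normal_density x *\<^sub>R exp (\<i> * complex_of_real (v * x))))"
    by (auto simp: std_normal_density_def scaleR_conv_of_real fun_eq_iff)
  show "integrable lborel (\<lambda>x. complex_of_real (exp (- x\<^sup>2 / 2)) * exp (\<i> * complex_of_real (v * x)))"
    unfolding eqf using i2 by (rule integrable_mult_right)
  have "char std_normal_distribution v = (\<integral>x. std_normal_density x *\<^sub>R exp (\<i> * complex_of_real (v * x)) \<partial>lborel)"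
    unfolding char_def by (subst integral_density) auto
  then have "(\<integral>x. std_normal_density x *\<^sub>R exp (\<i> * complex_of_real (v * x)) \<partial>lborel) = complex_of_real (exp (- v\<^sup>2 / 2))"
    by (simp add: char_std_normal_distribution)
  then show "(\<integral>x. complex_of_real (exp (- x\<^sup>2 / 2)) * exp (\<i> * complex_of_real (v * x)) \<partial>lborel)
         = complex_of_real (sqrt (2*pi) * exp (- v\<^sup>2 / 2))"
    unfolding eqf integral_mult_right_zero by simp
qed

lemma gauss1:
  fixes p :: real and w :: complex
  assumes p: "p > 0"
  shows "integrable lborel (\<lambda>t. exp (complex_of_real (- p * t\<^sup>2) + w * complex_of_real t))"
    and "(\<integral>t. exp (complex_of_real (- p * t\<^sup>2) + w * complex_of_real t) \<partial>lborel)
         = complex_of_real (sqrt (pi / p)) * exp (w\<^sup>2 / complex_of_real (4 * p))"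
proof -
  define u where "u = Re w"
  define v where "v = Im w"
  have w: "w = complex_of_real u + \<i> * complex_of_real v" by (simp add: u_def v_def complex_eq_iff)
  define c where "c = 1 / sqrt (2 * p)"
  define t0 where "t0 = u / (2 * p)"
  have c0: "c \<noteq> 0" "c > 0" using p by (auto simp: c_def)
  have pc: "p * c\<^sup>2 = 1/2" using p by (simp add: c_def power_divide)
  define f where "f = (\<lambda>t. exp (complex_of_real (- p * t\<^sup>2) + w * complex_of_real t))"
  define K where "K = exp (complex_of_real (u\<^sup>2 / (4 * p)) + \<i> * complex_of_real (v * t0))"
  have fx: "f (t0 + c * x) = K * (complex_of_real (exp (- x\<^sup>2 / 2)) * exp (\<i> * complex_of_real ((v * c) * x)))" for x
  proof -
    have "complex_of_real (- p * (t0 + c * x)\<^sup>2) + w * complex_of_real (t0 + c * x)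
       = (complex_of_real (u\<^sup>2 / (4 * p)) + \<i> * complex_of_real (v * t0)) + (complex_of_real (- x\<^sup>2 / 2) + \<i> * complex_of_real ((v * c) * x))"
    proof -
      have r: "- p * (t0 + c * x)\<^sup>2 + u * (t0 + c * x) = u\<^sup>2 / (4 * p) + (- x\<^sup>2 / 2)"
        using p pc unfolding t0_def by (simp add: field_simps power2_eq_square)
      show ?thesis unfolding w
        using r by (simp add: complex_eq_iff algebra_simps)
    qed
    then show ?thesis unfolding f_def K_def by (simp only: exp_add exp_of_real mult.assoc)
  qed
  note S = std_char_lborel[of "v * c"]
  have int2: "integrable lborel (\<lambda>x. f (t0 + c * x))"
    unfolding fx by (intro integrable_mult_right S(1))
  show "integrable lborel (\<lambda>t. exp (complex_of_real (- p * t\<^sup>2) + w * complex_of_real t))"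
    using int2 lborel_integrable_real_affine_iff[OF c0(1), of f t0] unfolding f_def by simp
  have "(\<integral>t. f t \<partial>lborel) = \<bar>c\<bar> *\<^sub>R (\<integral>x. f (t0 + c * x) \<partial>lborel)"
    by (rule lborel_integral_real_affine[OF c0(1)])
  also have "\<dots> = complex_of_real c * (K * complex_of_real (sqrt (2*pi) * exp (- (v * c)\<^sup>2 / 2)))"
    unfolding fx integral_mult_right_zero S(2) using c0 by (simp add: scaleR_conv_of_real)
  also have "\<dots> = complex_of_real (sqrt (pi / p)) * exp (w\<^sup>2 / complex_of_real (4 * p))"
  proof -
    have e1: "c * sqrt (2*pi) = sqrt (pi / p)" using p
      by (simp add: c_def real_sqrt_divide real_sqrt_mult field_simps)
    have e2: "K * complex_of_real (exp (- (v * c)\<^sup>2 / 2)) = exp (w\<^sup>2 / complex_of_real (4 * p))"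
    proof -
      have "K * complex_of_real (exp (- (v * c)\<^sup>2 / 2)) = exp ((complex_of_real (u\<^sup>2 / (4 * p)) + \<i> * complex_of_real (v * t0)) + complex_of_real (- (v * c)\<^sup>2 / 2))"
        unfolding K_def by (simp only: exp_add exp_of_real)
      also have "(complex_of_real (u\<^sup>2 / (4 * p)) + \<i> * complex_of_real (v * t0)) + complex_of_real (- (v * c)\<^sup>2 / 2) = w\<^sup>2 / complex_of_real (4 * p)"
        using p pc unfolding w t0_def
        by (simp add: complex_eq_iff power2_eq_square field_simps)
      finally show ?thesis .
    qed
    show ?thesis using e1 e2 by (metis (no_types, lifting) mult.assoc mult.left_commute of_real_mult)
  qed
  finally show "(\<integral>t. exp (complex_of_real (- p * t\<^sup>2) + w * complex_of_real t) \<partial>lborel)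
         = complex_of_real (sqrt (pi / p)) * exp (w\<^sup>2 / complex_of_real (4 * p))" unfolding f_def .
qed



lemma euclid_sum_inner:
  fixes f :: "'a::euclidean_space \<Rightarrow> real"
  assumes "b \<in> Basis"
  shows "(\<Sum>c\<in>Basis. f c *\<^sub>R c) \<bullet> b = f b"
  using assms by (simp add: inner_sum_left inner_Basis if_distrib sum.delta cong: if_cong)

lemma gaussE:
  fixes u v :: "'a::euclidean_space" and p :: real
  assumes p: "p > 0"
  shows "integrable lborel (\<lambda>x::'a. exp (complex_of_real (- p * (norm x)\<^sup>2) + complex_of_real (u \<bullet> x) + \<i> * complex_of_real (v \<bullet> x)))"
    and "(\<integral>x. exp (complex_of_real (- p * (norm x)\<^sup>2) + complex_of_real (u \<bullet> x) + \<i> * complex_of_real (v \<bullet> x)) \<partial>lborel)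
       = complex_of_real (sqrt (pi / p) ^ DIM('a)) *
         exp ((complex_of_real ((norm u)\<^sup>2 - (norm v)\<^sup>2) + 2 * \<i> * complex_of_real (u \<bullet> v)) / complex_of_real (4 * p))"
proof -
  define F where "F = (\<lambda>x::'a. exp (complex_of_real (- p * (norm x)\<^sup>2) + complex_of_real (u \<bullet> x) + \<i> * complex_of_real (v \<bullet> x)))"
  define w where "w = (\<lambda>b. complex_of_real (u \<bullet> b) + \<i> * complex_of_real (v \<bullet> b))"
  define G where "G = (\<lambda>b t. exp (complex_of_real (- p * t\<^sup>2) + w b * complex_of_real t))"
  interpret PS: product_sigma_finite "\<lambda>_::'a. lborel::real measure" by standard
  have Fm: "F \<in> borel_measurable borel" unfolding F_def by measurable
  have FG: "F (\<Sum>b\<in>Basis. f b *\<^sub>R b) = (\<Prod>b\<in>Basis. G b (f b))" for f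
  proof -
    let ?x = "\<Sum>b\<in>Basis. f b *\<^sub>R b"
    have n: "(norm ?x)\<^sup>2 = (\<Sum>b\<in>Basis. (f b)\<^sup>2)"
      unfolding power2_norm_eq_inner by (subst euclidean_inner) (simp add: euclid_sum_inner power2_eq_square)
    have iu: "u \<bullet> ?x = (\<Sum>b\<in>Basis. (u \<bullet> b) * f b)"
      by (simp add: euclidean_inner[of u ?x] euclid_sum_inner)
    have iv: "v \<bullet> ?x = (\<Sum>b\<in>Basis. (v \<bullet> b) * f b)"
      by (simp add: euclidean_inner[of v ?x] euclid_sum_inner)
    have "complex_of_real (- p * (norm ?x)\<^sup>2) + complex_of_real (u \<bullet> ?x) + \<i> * complex_of_real (v \<bullet> ?x)
       = (\<Sum>b\<in>Basis. complex_of_real (- p * (f b)\<^sup>2) + w b * complex_of_real (f b))"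
    proof -
      have a: "(\<Sum>b\<in>Basis. complex_of_real (- p * (f b)\<^sup>2) + w b * complex_of_real (f b))
         = (\<Sum>b\<in>Basis. complex_of_real (- p * (f b)\<^sup>2)) + (\<Sum>b\<in>Basis. complex_of_real ((u \<bullet> b) * f b))
           + \<i> * (\<Sum>b\<in>Basis. complex_of_real ((v \<bullet> b) * f b))"
      proof -
        have "(\<Sum>b\<in>Basis. complex_of_real (- p * (f b)\<^sup>2) + w b * complex_of_real (f b))
          = (\<Sum>b\<in>Basis. complex_of_real (- p * (f b)\<^sup>2) + complex_of_real ((u \<bullet> b) * f b) + \<i> * complex_of_real ((v \<bullet> b) * f b))"
          unfolding w_def by (intro sum.cong refl) (simp add: algebra_simps)
        then show ?thesis by (simp only: sum.distrib sum_distrib_left)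
      qed
      have b: "(\<Sum>b\<in>Basis. complex_of_real (- p * (f b)\<^sup>2)) = complex_of_real (- p * (\<Sum>b\<in>Basis. (f b)\<^sup>2))"
        by (simp only: sum_distrib_left[symmetric] of_real_sum[symmetric] mult_minus_left sum_negf)
      show ?thesis unfolding a b n iu iv of_real_sum ..
    qed
    then show ?thesis unfolding F_def G_def by (simp add: exp_sum)
  qed
  have Gi: "integrable lborel (G b)" for b unfolding G_def using gauss1(1)[OF p] .
  have Gv: "integral\<^sup>L lborel (G b) = complex_of_real (sqrt (pi / p)) * exp ((w b)\<^sup>2 / complex_of_real (4 * p))" for b
    unfolding G_def using gauss1(2)[OF p] .
  have PiI: "integrable (Pi\<^sub>M Basis (\<lambda>_. lborel)) (\<lambda>f. \<Prod>b\<in>Basis. G b (f b))"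
    by (rule PS.product_integrable_prod) (auto intro: Gi)
  have meas: "(\<lambda>f. \<Sum>b\<in>Basis. f b *\<^sub>R b) \<in> (Pi\<^sub>M Basis (\<lambda>_. lborel)) \<rightarrow>\<^sub>M (borel :: 'a measure)"
    by measurable
  show "integrable lborel F"
    apply (subst lborel_eq)
    apply (subst integrable_distr_eq[OF meas Fm])
    unfolding FG using PiI .
  have "integral\<^sup>L lborel F = (\<integral>f. F (\<Sum>b\<in>Basis. f b *\<^sub>R b) \<partial>(Pi\<^sub>M Basis (\<lambda>_. lborel)))"
    by (subst lborel_eq) (rule integral_distr[OF meas Fm])
  also have "\<dots> = (\<Prod>b\<in>Basis. integral\<^sup>L lborel (G b))"
    unfolding FG by (rule PS.product_integral_prod) (auto intro: Gi)
  also have "\<dots> = (\<Prod>b\<in>Basis. complex_of_real (sqrt (pi / p)) * exp ((w b)\<^sup>2 / complex_of_real (4 * p)))"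
    using Gv by simp
  also have "\<dots> = complex_of_real (sqrt (pi / p) ^ DIM('a)) * exp (\<Sum>b\<in>Basis. (w b)\<^sup>2 / complex_of_real (4 * p))"
    by (simp add: prod.distrib exp_sum)
  also have "(\<Sum>b\<in>Basis. (w b)\<^sup>2 / complex_of_real (4 * p)) =
     (complex_of_real ((norm u)\<^sup>2 - (norm v)\<^sup>2) + 2 * \<i> * complex_of_real (u \<bullet> v)) / complex_of_real (4 * p)"
  proof -
    have "(\<Sum>b\<in>Basis. (w b)\<^sup>2) = complex_of_real ((norm u)\<^sup>2 - (norm v)\<^sup>2) + 2 * \<i> * complex_of_real (u \<bullet> v)"
    proof -
      have "(\<Sum>b\<in>Basis. (w b)\<^sup>2) = (\<Sum>b\<in>Basis. complex_of_real ((u \<bullet> b) * (u \<bullet> b) - (v \<bullet> b) * (v \<bullet> b)) + 2 * \<i> * complex_of_real ((u \<bullet> b) * (v \<bullet> b)))"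
        unfolding w_def by (intro sum.cong refl) (simp add: power2_eq_square algebra_simps)
      also have "\<dots> = complex_of_real ((norm u)\<^sup>2 - (norm v)\<^sup>2) + 2 * \<i> * complex_of_real (u \<bullet> v)"
        by (simp add: sum.distrib power2_norm_eq_inner euclidean_inner[of u u] euclidean_inner[of v v]
              euclidean_inner[of u v] sum_subtractf sum_distrib_left flip: of_real_sum)
           (simp add: of_real_sum sum_distrib_left)
      finally show ?thesis .
    qed
    then show ?thesis by (simp add: sum_divide_distrib[symmetric])
  qed
  finally show "integral\<^sup>L lborel F = complex_of_real (sqrt (pi / p) ^ DIM('a)) *
         exp ((complex_of_real ((norm u)\<^sup>2 - (norm v)\<^sup>2) + 2 * \<i> * complex_of_real (u \<bullet> v)) / complex_of_real (4 * p))" .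
qed



lemma norm_exp_cpx: "norm (exp (complex_of_real a + \<i> * complex_of_real b)) = exp a"
  by (simp add: norm_exp_eq_Re)

lemma gaussPair:
  fixes ua va ub vb :: "'a::euclidean_space" and pa pb k :: real
  assumes pa: "pa > 0" and pb: "pb > 0"
  defines "F \<equiv> (\<lambda>z::'a\<times>'a. exp (complex_of_real (- pa * (norm (fst z))\<^sup>2 - pb * (norm (snd z))\<^sup>2 + ua \<bullet> fst z + ub \<bullet> snd z)
                  + \<i> * complex_of_real (k * (fst z \<bullet> snd z) + va \<bullet> fst z + vb \<bullet> snd z)))"
  defines "P \<equiv> pa + k\<^sup>2 / (4 * pb)"
  defines "U \<equiv> ua - (k / (2 * pb)) *\<^sub>R vb"
  defines "V \<equiv> va + (k / (2 * pb)) *\<^sub>R ub"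
  shows "integrable lborel F"
    and "integral\<^sup>L lborel F = complex_of_real (sqrt (pi / pb) ^ DIM('a) * sqrt (pi / P) ^ DIM('a)) *
           exp ((complex_of_real ((norm ub)\<^sup>2 - (norm vb)\<^sup>2) + 2 * \<i> * complex_of_real (ub \<bullet> vb)) / complex_of_real (4 * pb)
              + (complex_of_real ((norm U)\<^sup>2 - (norm V)\<^sup>2) + 2 * \<i> * complex_of_real (U \<bullet> V)) / complex_of_real (4 * P))"
proof -
  have P: "P > 0" unfolding P_def using pa pb by (simp add: add_pos_nonneg)
  define p where "p = min pa pb"
  have p: "p > 0" using pa pb by (simp add: p_def)
  have Fm: "F \<in> borel_measurable borel" unfolding F_def by (intro borel_measurable_continuous_onI continuous_intros)
  have bnd: "norm (F z) \<le> norm (exp (complex_of_real (- p * (norm z)\<^sup>2) + complex_of_real ((ua, ub) \<bullet> z) + \<i> * complex_of_real (0 \<bullet> z)))" for z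
  proof -
    have "- pa * (norm (fst z))\<^sup>2 - pb * (norm (snd z))\<^sup>2 \<le> - p * ((norm (fst z))\<^sup>2 + (norm (snd z))\<^sup>2)"
      unfolding p_def by (simp add: algebra_simps add_mono mult_right_mono)
    moreover have "(norm z)\<^sup>2 = (norm (fst z))\<^sup>2 + (norm (snd z))\<^sup>2"
      by (cases z) (simp add: norm_Pair power2_eq_square)
    moreover have "(ua, ub) \<bullet> z = ua \<bullet> fst z + ub \<bullet> snd z" by (cases z) (simp add: inner_Pair)
    ultimately show ?thesis unfolding F_def
      by (simp only: norm_exp_cpx inner_zero_left mult_zero_right of_real_0 add_0_right exp_le_cancel_iff norm_exp_eq_Re Re_complex_of_real) simp
  qed
  show intF: "integrable lborel F"
    by (rule Bochner_Integration.integrable_bound[OF gaussE(1)[OF p, of "(ua, ub)" 0]]) (use bnd Fm in auto)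

  have intF2: "integrable (lborel \<Otimes>\<^sub>M lborel) F" using intF by (simp add: lborel_prod)
  define A where "A = (\<lambda>a::'a. exp (complex_of_real (- pa * (norm a)\<^sup>2 + ua \<bullet> a) + \<i> * complex_of_real (va \<bullet> a)))"
  have Fsplit: "F (a, b) = A a * exp (complex_of_real (- pb * (norm b)\<^sup>2) + complex_of_real (ub \<bullet> b) + \<i> * complex_of_real ((vb + k *\<^sub>R a) \<bullet> b))" for a b
  proof -
    have "complex_of_real (- pa * (norm a)\<^sup>2 - pb * (norm b)\<^sup>2 + ua \<bullet> a + ub \<bullet> b) + \<i> * complex_of_real (k * (a \<bullet> b) + va \<bullet> a + vb \<bullet> b)
      = (complex_of_real (- pa * (norm a)\<^sup>2 + ua \<bullet> a) + \<i> * complex_of_real (va \<bullet> a)) +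
        (complex_of_real (- pb * (norm b)\<^sup>2) + complex_of_real (ub \<bullet> b) + \<i> * complex_of_real ((vb + k *\<^sub>R a) \<bullet> b))"
      by (simp add: complex_eq_iff inner_add_left inner_commute algebra_simps)
    then show ?thesis unfolding F_def A_def by (simp only: fst_conv snd_conv exp_add)
  qed
  define Cb where "Cb = (complex_of_real ((norm ub)\<^sup>2 - (norm vb)\<^sup>2) + 2 * \<i> * complex_of_real (ub \<bullet> vb)) / complex_of_real (4 * pb)"
  have inner: "(\<integral>b. F (a, b) \<partial>lborel) = complex_of_real (sqrt (pi / pb) ^ DIM('a)) *
      (exp Cb * exp (complex_of_real (- P * (norm a)\<^sup>2) + complex_of_real (U \<bullet> a) + \<i> * complex_of_real (V \<bullet> a)))" for a
  proof -
    have e1: "(\<integral>b. F (a, b) \<partial>lborel) = complex_of_real (sqrt (pi / pb) ^ DIM('a)) * (A a *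
         exp ((complex_of_real ((norm ub)\<^sup>2 - (norm (vb + k *\<^sub>R a))\<^sup>2) + 2 * \<i> * complex_of_real (ub \<bullet> (vb + k *\<^sub>R a))) / complex_of_real (4 * pb)))"
      unfolding Fsplit integral_mult_right_zero gaussE(2)[OF pb] by (simp add: mult_ac)
    have e2: "A a * exp ((complex_of_real ((norm ub)\<^sup>2 - (norm (vb + k *\<^sub>R a))\<^sup>2) + 2 * \<i> * complex_of_real (ub \<bullet> (vb + k *\<^sub>R a))) / complex_of_real (4 * pb))
       = exp Cb * exp (complex_of_real (- P * (norm a)\<^sup>2) + complex_of_real (U \<bullet> a) + \<i> * complex_of_real (V \<bullet> a))"
    proof -
      have "(complex_of_real (- pa * (norm a)\<^sup>2 + ua \<bullet> a) + \<i> * complex_of_real (va \<bullet> a)) +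
          (complex_of_real ((norm ub)\<^sup>2 - (norm (vb + k *\<^sub>R a))\<^sup>2) + 2 * \<i> * complex_of_real (ub \<bullet> (vb + k *\<^sub>R a))) / complex_of_real (4 * pb)
        = Cb + (complex_of_real (- P * (norm a)\<^sup>2) + complex_of_real (U \<bullet> a) + \<i> * complex_of_real (V \<bullet> a))"
        using pb unfolding Cb_def P_def U_def V_def
        by (simp add: complex_eq_iff power2_norm_eq_inner inner_add_left inner_add_right inner_diff_left inner_commute
            field_simps) (simp add: algebra_simps power2_eq_square)
      then show ?thesis unfolding A_def by (simp flip: exp_add)
    qed
    show ?thesis unfolding e1 e2 ..
  qed
  have "integral\<^sup>L lborel F = integral\<^sup>L (lborel \<Otimes>\<^sub>M lborel) F" by (simp add: lborel_prod)
  also have "\<dots> = (\<integral>a. (\<integral>b. F (a, b) \<partial>lborel) \<partial>lborel)" by (rule lborel_pair.integral_fst'[OF intF2, symmetric])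
  also have "\<dots> = (\<integral>a. complex_of_real (sqrt (pi / pb) ^ DIM('a)) * exp Cb *
        exp (complex_of_real (- P * (norm a)\<^sup>2) + complex_of_real (U \<bullet> a) + \<i> * complex_of_real (V \<bullet> a)) \<partial>lborel)"
    unfolding inner by (simp add: mult_ac)
  also have "\<dots> = complex_of_real (sqrt (pi / pb) ^ DIM('a)) * exp Cb *
      (complex_of_real (sqrt (pi / P) ^ DIM('a)) *
         exp ((complex_of_real ((norm U)\<^sup>2 - (norm V)\<^sup>2) + 2 * \<i> * complex_of_real (U \<bullet> V)) / complex_of_real (4 * P)))"
    unfolding integral_mult_right_zero gaussE(2)[OF P] ..
  also have "\<dots> = complex_of_real (sqrt (pi / pb) ^ DIM('a) * sqrt (pi / P) ^ DIM('a)) *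
           exp (Cb + (complex_of_real ((norm U)\<^sup>2 - (norm V)\<^sup>2) + 2 * \<i> * complex_of_real (U \<bullet> V)) / complex_of_real (4 * P))"
    by (simp add: exp_add mult_ac)
  finally show "integral\<^sup>L lborel F = complex_of_real (sqrt (pi / pb) ^ DIM('a) * sqrt (pi / P) ^ DIM('a)) *
           exp ((complex_of_real ((norm ub)\<^sup>2 - (norm vb)\<^sup>2) + 2 * \<i> * complex_of_real (ub \<bullet> vb)) / complex_of_real (4 * pb)
              + (complex_of_real ((norm U)\<^sup>2 - (norm V)\<^sup>2) + 2 * \<i> * complex_of_real (U \<bullet> V)) / complex_of_real (4 * P))"
    unfolding Cb_def .
qed



typedef (overloaded) 'a bidx = "Basis :: 'a::euclidean_space set" morphisms rep_bidx abs_bidx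
  using nonempty_Basis by blast

lemma UNIV_bidx: "(UNIV :: 'a::euclidean_space bidx set) = abs_bidx ` Basis"
  by (rule sym) (rule type_definition.Abs_image[OF type_definition_bidx])

instance bidx :: (euclidean_space) finite
  by standard (simp add: UNIV_bidx)

definition bidx_idx :: "'a::euclidean_space bidx \<Rightarrow> nat" where
  "bidx_idx = (SOME f. inj f)"

lemma inj_bidx_idx: "inj (bidx_idx :: 'a::euclidean_space bidx \<Rightarrow> nat)"
proof -
  obtain f :: "'a bidx \<Rightarrow> nat" and n where "inj_on f UNIV"
    using finite_imp_inj_to_nat_seg[of "UNIV :: 'a bidx set"] by auto
  then have "\<exists>f :: 'a bidx \<Rightarrow> nat. inj f" by blast
  then show ?thesis unfolding bidx_idx_def by (rule someI_ex)
qed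

instantiation bidx :: (euclidean_space) linorder
begin
definition less_eq_bidx :: "'a bidx \<Rightarrow> 'a bidx \<Rightarrow> bool" where "less_eq_bidx x y = (bidx_idx x \<le> bidx_idx y)"
definition less_bidx :: "'a bidx \<Rightarrow> 'a bidx \<Rightarrow> bool" where "less_bidx x y = (bidx_idx x < bidx_idx y)"
instance
proof
  fix x y z :: "'a bidx"
  show "(x < y) = (x \<le> y \<and> \<not> y \<le> x)" by (auto simp: less_eq_bidx_def less_bidx_def)
  show "x \<le> x" by (simp add: less_eq_bidx_def)
  show "x \<le> y \<Longrightarrow> y \<le> z \<Longrightarrow> x \<le> z" by (simp add: less_eq_bidx_def)
  show "x \<le> y \<Longrightarrow> y \<le> x \<Longrightarrow> x = y" using inj_bidx_idx[where 'a='a]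
    by (auto simp: less_eq_bidx_def dest: injD)
  show "x \<le> y \<or> y \<le> x" by (auto simp: less_eq_bidx_def)
qed
end

instance bidx :: (euclidean_space) wellorder
proof
  fix P :: "'a bidx \<Rightarrow> bool" and a
  assume H: "\<And>x. (\<And>y. y < x \<Longrightarrow> P y) \<Longrightarrow> P x"
  show "P a"
    by (induct a rule: measure_induct_rule[of bidx_idx]) (rule H, simp add: less_bidx_def)
qed

lemma bij_rep_bidx: "bij_betw rep_bidx (UNIV :: 'a::euclidean_space bidx set) Basis"
  by (metis bij_betw_def inj_def rep_bidx_inject type_definition.Rep_range type_definition_bidx)

lemma card_bidx: "CARD('a::euclidean_space bidx) = DIM('a)"
  using bij_betw_same_card[OF bij_rep_bidx[where 'a='a]] by simp

lemma distr_density_const: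
  assumes f: "f \<in> M \<rightarrow>\<^sub>M N"
  shows "distr (density M (\<lambda>_. c)) N f = density (distr M N f) (\<lambda>_. c)"
proof (rule measure_eqI)
  show "sets (distr (density M (\<lambda>_. c)) N f) = sets (density (distr M N f) (\<lambda>_. c))" by simp
  fix A assume A: "A \<in> sets (distr (density M (\<lambda>_. c)) N f)"
  then have A': "A \<in> sets N" by simp
  have pre: "f -` A \<inter> space M \<in> sets M" using f A' by (rule measurable_sets)
  show "emeasure (distr (density M (\<lambda>_. c)) N f) A = emeasure (density (distr M N f) (\<lambda>_. c)) A"
    using A' pre f by (simp add: emeasure_distr emeasure_density_const)
qed

lemma lin_real_n:
  fixes G H :: "real^'n::{finite,wellorder} \<Rightarrow> real^'n::_"
  assumes G: "linear G" and H: "linear H" and HG: "\<And>x. H (G x) = x" and GH: "\<And>x. G (H x) = x"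
  shows "lborel = density (distr lborel borel G) (\<lambda>_. ennreal \<bar>det (matrix G)\<bar>)"
proof (rule lborel_eqI)
  have dd: "det (matrix G) * det (matrix H) = 1"
  proof -
    have "G \<circ> H = id" using GH by auto
    then have "matrix G ** matrix H = mat 1" using matrix_compose[OF H G] by (simp add: matrix_id_mat_1)
    then show ?thesis by (metis det_I det_mul)
  qed
  have Gm: "G \<in> borel \<rightarrow>\<^sub>M borel" using G
    by (intro borel_measurable_continuous_onI linear_continuous_on) (simp add: linear_conv_bounded_linear[symmetric])
  show "sets (density (distr lborel borel G) (\<lambda>_. ennreal \<bar>det (matrix G)\<bar>)) = sets borel" by simp
  fix l u :: "real^'n::_"
  assume lu: "\<And>b. b \<in> Basis \<Longrightarrow> l \<bullet> b \<le> u \<bullet> b"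
  have pre: "G -` box l u = H ` box l u"
    using HG GH by (auto simp: image_iff) (metis)
  have hm: "H ` box l u \<in> lmeasurable" by (intro measurable_linear_image H) simp
  have hb: "H ` box l u \<in> sets borel"
    using measurable_sets[OF Gm, of "box l u"] pre by simp
  have bnd: "bounded (H ` box l u)"
    using H by (intro bounded_linear_image) (auto simp: linear_conv_bounded_linear[symmetric])
  have e1: "emeasure lborel (H ` box l u) = ennreal (measure lborel (H ` box l u))"
    using emeasure_bounded_finite[OF bnd] by (intro emeasure_eq_ennreal_measure) simp
  have e2: "measure lborel (H ` box l u) = \<bar>det (matrix H)\<bar> * measure lborel (box l u)"
    using measure_linear_image[OF H, of "box l u"] hb by simp
  have "emeasure (density (distr lborel borel G) (\<lambda>_. ennreal \<bar>det (matrix G)\<bar>)) (box l u)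
      = ennreal \<bar>det (matrix G)\<bar> * emeasure lborel (H ` box l u)"
    using Gm by (simp add: emeasure_density_const emeasure_distr pre)
  also have "\<dots> = ennreal (\<bar>det (matrix G)\<bar> * (\<bar>det (matrix H)\<bar> * measure lborel (box l u)))"
    unfolding e1 e2 by (simp add: ennreal_mult)
  also have "\<bar>det (matrix G)\<bar> * (\<bar>det (matrix H)\<bar> * measure lborel (box l u)) = measure lborel (box l u)"
    using dd by (simp add: abs_mult[symmetric] mult.assoc[symmetric])
  also have "ennreal (measure lborel (box l u)) = (\<Prod>b\<in>Basis. (u - l) \<bullet> b)"
    using lu by (simp add: measure_lborel_box_eq prod_nonneg inner_diff_left)
  finally show "emeasure (density (distr lborel borel G) (\<lambda>_. ennreal \<bar>det (matrix G)\<bar>)) (box l u) = (\<Prod>b\<in>Basis. (u - l) \<bullet> b)" .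
qed


lemma Basis_cart_range: "(Basis :: (real^'n) set) = range (\<lambda>i. axis i 1)"
  by (auto simp: Basis_vec_def)

lemma prod_Basis_cart: "(\<Prod>b\<in>(Basis::(real^'n) set). f b) = (\<Prod>i\<in>UNIV. f (axis i 1))"
  unfolding Basis_cart_range by (subst prod.reindex) (auto simp: inj_on_def axis_eq_axis)

lemma lin_cont_meas: "linear (f :: 'a::euclidean_space \<Rightarrow> 'b::euclidean_space) \<Longrightarrow> f \<in> borel_measurable borel"
  by (intro borel_measurable_continuous_onI linear_continuous_on) (simp add: linear_conv_bounded_linear[symmetric])

lemma coord_inner:
  fixes \<beta> :: "'n::finite \<Rightarrow> 'a::euclidean_space"
  assumes \<beta>: "bij_betw \<beta> UNIV Basis"
  shows "(\<Sum>j\<in>UNIV. c j *\<^sub>R \<beta> j) \<bullet> \<beta> i = c i"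
proof -
  have "(\<Sum>j\<in>UNIV. c j *\<^sub>R \<beta> j) \<bullet> \<beta> i = (\<Sum>j\<in>UNIV. c j * (\<beta> j \<bullet> \<beta> i))"
    by (simp add: inner_sum_left)
  also have "\<dots> = (\<Sum>j\<in>UNIV. if j = i then c j else 0)"
  proof (intro sum.cong refl)
    fix j
    have "\<beta> j \<in> Basis" "\<beta> i \<in> Basis" using \<beta> by (auto simp: bij_betw_def)
    moreover have "\<beta> j = \<beta> i \<longleftrightarrow> j = i" using \<beta> by (auto simp: bij_betw_def inj_on_def)
    ultimately show "c j * (\<beta> j \<bullet> \<beta> i) = (if j = i then c j else 0)" by (auto simp: inner_Basis)
  qed
  finally show ?thesis by simp
qed

lemma coord_repr:
  fixes \<beta> :: "'n::finite \<Rightarrow> 'a::euclidean_space"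
  assumes \<beta>: "bij_betw \<beta> UNIV Basis"
  shows "(\<Sum>j\<in>UNIV. (x \<bullet> \<beta> j) *\<^sub>R \<beta> j) = x"
proof -
  have "(\<Sum>j\<in>UNIV. (x \<bullet> \<beta> j) *\<^sub>R \<beta> j) = (\<Sum>b\<in>Basis. (x \<bullet> b) *\<^sub>R b)"
    by (rule sum.reindex_bij_betw[OF \<beta>])
  then show ?thesis by (simp add: euclidean_representation)
qed

lemma coord_mp:
  fixes \<beta> :: "'n::finite \<Rightarrow> 'a::euclidean_space"
  assumes \<beta>: "bij_betw \<beta> UNIV Basis"
  shows "distr lborel borel (\<lambda>x::'a. \<chi> i. x \<bullet> \<beta> i) = (lborel :: (real^'n) measure)"
proof (rule lborel_eqI[symmetric])
  let ?E = "\<lambda>x::'a. \<chi> i. x \<bullet> \<beta> i"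
  have lin: "linear ?E" by (auto intro!: linearI simp: vec_eq_iff inner_add_left)
  have Em: "?E \<in> borel_measurable borel" by (rule lin_cont_meas[OF lin])
  show "sets (distr lborel borel ?E) = sets borel" by simp
  fix l u :: "real^'n"
  assume lu: "\<And>b. b \<in> Basis \<Longrightarrow> l \<bullet> b \<le> u \<bullet> b"
  then have lu': "l $ i \<le> u $ i" for i using lu[of "axis i 1"] by (auto simp: Basis_cart_range cart_eq_inner_axis)
  define L where "L = (\<Sum>j\<in>UNIV. (l $ j) *\<^sub>R \<beta> j)"
  define U where "U = (\<Sum>j\<in>UNIV. (u $ j) *\<^sub>R \<beta> j)"
  have Li: "L \<bullet> \<beta> i = l $ i" "U \<bullet> \<beta> i = u $ i" for i
    unfolding L_def U_def using coord_inner[OF \<beta>] by auto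
  have BB: "(\<forall>b\<in>Basis. P b) \<longleftrightarrow> (\<forall>i. P (\<beta> i))" for P
    using \<beta> by (auto simp: bij_betw_def) (metis UNIV_I image_iff)
  have pre: "?E -` box l u = box L U"
    by (auto simp: mem_box_cart mem_box BB Li)
  have "emeasure (distr lborel borel ?E) (box l u) = emeasure lborel (box L U)"
    using Em by (simp add: emeasure_distr pre)
  also have "\<dots> = (\<Prod>b\<in>Basis. (U - L) \<bullet> b)"
    using lu' by (simp add: emeasure_lborel_box_eq BB inner_diff_left Li)
  also have "(\<Prod>b\<in>Basis. (U - L) \<bullet> b) = (\<Prod>i\<in>UNIV. (U - L) \<bullet> \<beta> i)"
    by (rule prod.reindex_bij_betw[OF \<beta>, symmetric])
  also have "\<dots> = (\<Prod>b\<in>Basis. (u - l) \<bullet> b)"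
    by (simp add: prod_Basis_cart inner_diff_left Li cart_eq_inner_axis[symmetric])
  finally show "emeasure (distr lborel borel ?E) (box l u) = (\<Prod>b\<in>Basis. (u - l) \<bullet> b)"
    by (simp add: prod_nonneg)
qed


lemma linear_inv_bij:
  fixes T :: "'a::real_vector \<Rightarrow> 'b::real_vector"
  assumes T: "linear T" and b: "bij T"
  shows "linear (inv T)"
proof (rule linearI)
  have inj: "inj T" and sur: "\<And>y. T (inv T y) = y" using b by (auto simp: bij_def surj_f_inv_f)
  fix x y :: 'b and c :: real
  show "inv T (x + y) = inv T x + inv T y"
    by (rule injD[OF inj]) (simp add: sur linear_add[OF T])
  show "inv T (c *\<^sub>R x) = c *\<^sub>R inv T x"
    by (rule injD[OF inj]) (simp add: sur linear_scale[OF T])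
qed

lemma lcv:
  fixes T :: "'a::euclidean_space \<Rightarrow> 'b::euclidean_space"
  assumes T: "linear T" and bT: "bij T"
  shows "\<exists>c>0. lborel = density (distr lborel borel T) (\<lambda>_. ennreal c)"
proof -
  define S where "S = inv T"
  have S: "linear S" unfolding S_def by (rule linear_inv_bij[OF T bT])
  have ST: "S (T x) = x" for x unfolding S_def using bT by (simp add: bij_def inv_f_f)
  have TS: "T (S y) = y" for y unfolding S_def using bT by (simp add: bij_def surj_f_inv_f)
  have dimeq: "DIM('a) = DIM('b)"
  proof -
    have "dim (T ` UNIV) = dim (UNIV :: 'a set)"
      by (rule dim_image_eq[OF T]) (use bT in \<open>auto simp: bij_def inj_on_def\<close>)
    moreover have "T ` UNIV = UNIV" using bT by (simp add: bij_def)
    ultimately show ?thesis by simp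
  qed
  obtain \<beta>b :: "'a bidx \<Rightarrow> 'b" where \<beta>b: "bij_betw \<beta>b UNIV Basis"
    using finite_same_card_bij[of "UNIV :: 'a bidx set" "Basis :: 'b set"] card_bidx[where 'a='a] dimeq by auto
  have \<beta>a: "bij_betw (rep_bidx :: 'a bidx \<Rightarrow> 'a) UNIV Basis" by (rule bij_rep_bidx)
  define Ea where "Ea = (\<lambda>x::'a. \<chi> i::'a bidx. x \<bullet> rep_bidx i)"
  define Eb where "Eb = (\<lambda>x::'b. \<chi> i::'a bidx. x \<bullet> \<beta>b i)"
  define Ea' where "Ea' = (\<lambda>v::real^'a bidx. \<Sum>j\<in>UNIV. (v $ j) *\<^sub>R (rep_bidx j :: 'a))"
  define Eb' where "Eb' = (\<lambda>v::real^'a bidx. \<Sum>j\<in>UNIV. (v $ j) *\<^sub>R \<beta>b j)"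
  have linEa: "linear Ea" unfolding Ea_def by (auto intro!: linearI simp: vec_eq_iff inner_add_left)
  have linEb: "linear Eb" unfolding Eb_def by (auto intro!: linearI simp: vec_eq_iff inner_add_left)
  have linEa': "linear Ea'" unfolding Ea'_def by (auto intro!: linearI simp: sum.distrib scaleR_add_left scaleR_sum_right)
  have linEb': "linear Eb'" unfolding Eb'_def by (auto intro!: linearI simp: sum.distrib scaleR_add_left scaleR_sum_right)
  have Ea'Ea: "Ea' (Ea x) = x" for x unfolding Ea'_def Ea_def using coord_repr[OF \<beta>a] by simp
  have EaEa': "Ea (Ea' v) = v" for v unfolding Ea'_def Ea_def using coord_inner[OF \<beta>a] by (simp add: vec_eq_iff)
  have Eb'Eb: "Eb' (Eb x) = x" for x unfolding Eb'_def Eb_def using coord_repr[OF \<beta>b] by simp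
  have EbEb': "Eb (Eb' v) = v" for v unfolding Eb'_def Eb_def using coord_inner[OF \<beta>b] by (simp add: vec_eq_iff)
  have mEa: "Ea \<in> borel \<rightarrow>\<^sub>M borel" by (rule lin_cont_meas[OF linEa])
  have mEb: "Eb \<in> borel \<rightarrow>\<^sub>M borel" by (rule lin_cont_meas[OF linEb])
  have mEa': "Ea' \<in> borel \<rightarrow>\<^sub>M borel" by (rule lin_cont_meas[OF linEa'])
  have mEb': "Eb' \<in> borel \<rightarrow>\<^sub>M borel" by (rule lin_cont_meas[OF linEb'])
  have mT: "T \<in> borel \<rightarrow>\<^sub>M borel" by (rule lin_cont_meas[OF T])
  have da: "distr lborel borel Ea = lborel" unfolding Ea_def by (rule coord_mp[OF \<beta>a])
  have db: "distr lborel borel Eb = lborel" unfolding Eb_def by (rule coord_mp[OF \<beta>b])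
  have la: "distr lborel borel Ea' = (lborel :: 'a measure)"
  proof -
    have "distr lborel borel Ea' = distr (distr lborel borel Ea) borel Ea'" by (simp add: da)
    also have "\<dots> = distr lborel borel (Ea' \<circ> Ea)" using mEa mEa' by (simp add: distr_distr)
    also have "\<dots> = distr lborel borel (\<lambda>x. x)" by (simp add: comp_def Ea'Ea)
    also have "\<dots> = lborel" by (rule distr_id2) simp
    finally show ?thesis .
  qed
  have lb: "distr lborel borel Eb' = (lborel :: 'b measure)"
  proof -
    have "distr lborel borel Eb' = distr (distr lborel borel Eb) borel Eb'" by (simp add: db)
    also have "\<dots> = distr lborel borel (Eb' \<circ> Eb)" using mEb mEb' by (simp add: distr_distr)
    also have "\<dots> = distr lborel borel (\<lambda>x. x)" by (simp add: comp_def Eb'Eb)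
    also have "\<dots> = lborel" by (rule distr_id2) simp
    finally show ?thesis .
  qed
  define G where "G = Eb \<circ> T \<circ> Ea'"
  define H where "H = Ea \<circ> S \<circ> Eb'"
  have linG: "linear G" unfolding G_def using linEb T linEa' by (intro linear_compose) auto
  have linH: "linear H" unfolding H_def using linEa S linEb' by (intro linear_compose) auto
  have HG: "H (G x) = x" for x by (simp add: G_def H_def Eb'Eb ST EaEa')
  have GH: "G (H x) = x" for x by (simp add: G_def H_def Ea'Ea TS EbEb')
  have mG: "G \<in> borel \<rightarrow>\<^sub>M borel" by (rule lin_cont_meas[OF linG])
  have dd: "det (matrix G) * det (matrix H) = 1"
  proof -
    have "G \<circ> H = id" using GH by auto
    then have "matrix G ** matrix H = mat 1" using matrix_compose[OF linH linG] by (simp add: matrix_id_mat_1)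
    then show ?thesis by (metis det_I det_mul)
  qed
  define c where "c = \<bar>det (matrix G)\<bar>"
  have c0: "c > 0" using dd by (auto simp: c_def)
  have ln: "lborel = density (distr lborel borel G) (\<lambda>_. ennreal c)"
    unfolding c_def by (rule lin_real_n[OF linG linH HG GH])
  have "(lborel :: 'b measure) = distr lborel borel Eb'" by (rule lb[symmetric])
  also have "\<dots> = distr (density (distr lborel borel G) (\<lambda>_. ennreal c)) borel Eb'"
    by (rule arg_cong[where f="\<lambda>M. distr M borel Eb'"]) (rule ln)
  also have "\<dots> = density (distr (distr lborel borel G) borel Eb') (\<lambda>_. ennreal c)"
    by (rule distr_density_const) (simp only: measurable_distr_eq1 mEb')
  also have "distr (distr lborel borel G) borel Eb' = distr lborel borel (Eb' \<circ> G)"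
    using mG mEb' by (simp add: distr_distr)
  also have "Eb' \<circ> G = T \<circ> Ea'" by (simp add: G_def fun_eq_iff Eb'Eb)
  also have "distr lborel borel (T \<circ> Ea') = distr (distr lborel borel Ea') borel T"
    using mT mEa' by (simp add: distr_distr)
  also have "\<dots> = distr lborel borel T" by (simp only: la)
  finally show ?thesis using c0 by blast
qed



lemma bil_linR: "bilinear B \<Longrightarrow> linear (B x)"
  by (simp add: bilinear_def)
lemma bil_linL: "bilinear B \<Longrightarrow> linear (\<lambda>x. B x y)"
  by (simp add: bilinear_def)

lemma bil_sumL: "bilinear B \<Longrightarrow> B (\<Sum>i\<in>S. f i) y = (\<Sum>i\<in>S. B (f i) y)"
  using linear_sum[OF bil_linL] by blast
lemma bil_sumR: "bilinear B \<Longrightarrow> B y (\<Sum>i\<in>S. f i) = (\<Sum>i\<in>S. B y (f i))"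
  using linear_sum[OF bil_linR] by blast
lemma bil_scaleL: "bilinear B \<Longrightarrow> B (r *\<^sub>R x) y = r * B x y"
  using linear_scale[OF bil_linL] by fastforce
lemma bil_scaleR: "bilinear B \<Longrightarrow> B y (r *\<^sub>R x) = r * B y x"
  using linear_scale[OF bil_linR] by fastforce
lemma bil_diffL: "bilinear B \<Longrightarrow> B (x - z) y = B x y - B z y"
  using linear_diff[OF bil_linL] by fastforce
lemma bil_diffR: "bilinear B \<Longrightarrow> B y (x - z) = B y x - B y z"
  using linear_diff[OF bil_linR] by fastforce
lemma bil_addL: "bilinear B \<Longrightarrow> B (x + z) y = B x y + B z y"
  using linear_add[OF bil_linL] by fastforce
lemma bil_addR: "bilinear B \<Longrightarrow> B y (x + z) = B y x + B y z"
  using linear_add[OF bil_linR] by fastforce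
lemma bil_minusL: "bilinear B \<Longrightarrow> B (- x) y = - B x y"
  using linear_neg[OF bil_linL] by fastforce
lemma bil_minusR: "bilinear B \<Longrightarrow> B y (- x) = - B y x"
  using linear_neg[OF bil_linR] by fastforce
lemma bil_zeroL: "bilinear B \<Longrightarrow> B 0 y = 0"
  using linear_0[OF bil_linL] by fastforce
lemma bil_zeroR: "bilinear B \<Longrightarrow> B y 0 = 0"
  using linear_0[OF bil_linR] by fastforce

lemma gs_step:
  fixes B :: "'a::euclidean_space \<Rightarrow> 'a \<Rightarrow> real"
  assumes bil: "bilinear B" and sym: "\<And>x y. B x y = B y x" and pos: "\<And>x. x \<noteq> 0 \<Longrightarrow> B x x > 0"
  shows "n \<le> DIM('a) \<Longrightarrow> \<exists>F. finite F \<and> card F = n \<and> (\<forall>f\<in>F. \<forall>g\<in>F. B f g = (if f = g then 1 else 0))"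
proof (induction n)
  case 0
  then show ?case by (intro exI[of _ "{}"]) auto
next
  case (Suc n)
  then obtain F where F: "finite F" "card F = n" and ON: "\<forall>f\<in>F. \<forall>g\<in>F. B f g = (if f = g then 1 else 0)"
    by auto
  have "span F \<noteq> UNIV"
  proof
    assume "span F = UNIV"
    then have "dim (UNIV::'a set) \<le> card F" using dim_le_card[of UNIV F] F by simp
    then show False using Suc.prems F by simp
  qed
  then obtain x where x: "x \<notin> span F" by auto
  define y where "y = x - (\<Sum>f\<in>F. B x f *\<^sub>R f)"
  have y0: "y \<noteq> 0"
  proof
    assume "y = 0"
    then have "x = (\<Sum>f\<in>F. B x f *\<^sub>R f)" unfolding y_def by simp
    also have "\<dots> \<in> span F" by (intro span_sum span_scale span_base)
    finally show False using x by simp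
  qed
  have yg: "B y g = 0" if g: "g \<in> F" for g
  proof -
    have "B y g = B x g - (\<Sum>f\<in>F. B x f * B f g)"
      unfolding y_def by (simp add: bil_diffL[OF bil] bil_sumL[OF bil] bil_scaleL[OF bil])
    also have "(\<Sum>f\<in>F. B x f * B f g) = (\<Sum>f\<in>F. if f = g then B x g else 0)"
      using ON g by (intro sum.cong refl) auto
    also have "\<dots> = B x g" using g F by (simp add: sum.delta')
    finally show ?thesis by simp
  qed
  define e where "e = (1 / sqrt (B y y)) *\<^sub>R y"
  have yy: "B y y > 0" using pos[OF y0] .
  have ee: "B e e = 1"
    unfolding e_def using yy
    by (simp add: bil_scaleL[OF bil] bil_scaleR[OF bil] real_sqrt_mult[symmetric] power2_eq_square[symmetric])
  have eg: "B e g = 0" if "g \<in> F" for g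
    unfolding e_def using yg[OF that] by (simp add: bil_scaleL[OF bil])
  have eF: "e \<notin> F" using ee eg by force
  show ?case
  proof (intro exI[of _ "insert e F"] conjI)
    show "finite (insert e F)" using F by simp
    show "card (insert e F) = Suc n" using F eF by simp
    show "\<forall>f\<in>insert e F. \<forall>g\<in>insert e F. B f g = (if f = g then 1 else 0)"
      using ON ee eg sym eF by auto
  qed
qed

lemma gs_exists:
  fixes B :: "'a::euclidean_space \<Rightarrow> 'a \<Rightarrow> real"
  assumes bil: "bilinear B" and sym: "\<And>x y. B x y = B y x" and pos: "\<And>x. x \<noteq> 0 \<Longrightarrow> B x x > 0"
  shows "\<exists>R::'a\<Rightarrow>'a. linear R \<and> bij R \<and> (\<forall>x y::'a. B (R x) (R y) = x \<bullet> y)"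
proof -
  obtain F where F: "finite F" "card F = DIM('a)" and ON: "\<forall>f\<in>F. \<forall>g\<in>F. B f g = (if f = g then 1 else 0)"
    using gs_step[OF bil sym pos, of "DIM('a)"] by auto
  obtain \<beta> where \<beta>: "bij_betw \<beta> (Basis::'a set) F"
    using finite_same_card_bij[of Basis F] F by auto
  define R where "R = (\<lambda>x. \<Sum>b\<in>Basis. (x \<bullet> b) *\<^sub>R \<beta> b)"
  have linR: "linear R" unfolding R_def
    by (auto intro!: linearI simp: inner_add_left sum.distrib scaleR_add_left scaleR_sum_right)
  have BR: "B (R x) (R y) = x \<bullet> y" for x y
  proof -
    have "B (R x) (R y) = (\<Sum>b\<in>Basis. (x \<bullet> b) * B (\<beta> b) (R y))"
      unfolding R_def by (simp add: bil_sumL[OF bil] bil_scaleL[OF bil])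
    also have "\<dots> = (\<Sum>b\<in>Basis. (x \<bullet> b) * (\<Sum>c\<in>Basis. (y \<bullet> c) * B (\<beta> b) (\<beta> c)))"
      unfolding R_def by (simp add: bil_sumR[OF bil] bil_scaleR[OF bil])
    also have "\<dots> = (\<Sum>b\<in>Basis. (x \<bullet> b) * (y \<bullet> b))"
    proof (intro sum.cong refl)
      fix b :: 'a assume b: "b \<in> Basis"
      have "(\<Sum>c\<in>Basis. (y \<bullet> c) * B (\<beta> b) (\<beta> c)) = (\<Sum>c\<in>Basis. if c = b then y \<bullet> b else 0)"
      proof (intro sum.cong refl)
        fix c :: 'a assume c: "c \<in> Basis"
        have "\<beta> b \<in> F" "\<beta> c \<in> F" using b c \<beta> by (auto simp: bij_betw_def)
        moreover have "\<beta> b = \<beta> c \<longleftrightarrow> b = c" using b c \<beta> by (auto simp: bij_betw_def inj_on_def)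
        ultimately show "(y \<bullet> c) * B (\<beta> b) (\<beta> c) = (if c = b then y \<bullet> b else 0)" using ON by auto
      qed
      also have "\<dots> = y \<bullet> b" using b by (simp add: sum.delta')
      finally show "(x \<bullet> b) * (\<Sum>c\<in>Basis. (y \<bullet> c) * B (\<beta> b) (\<beta> c)) = (x \<bullet> b) * (y \<bullet> b)" by simp
    qed
    also have "\<dots> = x \<bullet> y" by (rule euclidean_inner[symmetric])
    finally show ?thesis .
  qed
  have inj: "inj R"
  proof (rule linear_injective_0[OF linR, THEN iffD2], intro allI impI)
    fix x assume "R x = 0"
    then have "x \<bullet> x = B 0 0" using BR[of x x] by simp
    also have "B 0 0 = 0" by (rule bil_zeroL[OF bil])
    finally show "x = 0" by simp
  qed
  have "surj R" by (rule linear_inj_imp_surj[OF linR inj])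
  then have "bij R" using inj by (simp add: bij_def)
  then show ?thesis using linR BR by (intro exI[of _ R]) auto
qed



locale psetup =
  fixes br :: "'l::euclidean_space \<Rightarrow> 'l \<Rightarrow> real"
    and J :: "'l \<Rightarrow> 'l"
    and q :: "'l \<Rightarrow> 'q::euclidean_space"
    and j :: "'q \<Rightarrow> 'l"
  assumes bil: "bilinear br"
    and J_lin: "linear J"
    and J_sq: "\<forall>x. J (J x) = - x"
    and J_sympl: "\<forall>x y. omega br (J x) (J y) = omega br x y"
    and g_pos: "\<forall>x. x \<noteq> 0 \<longrightarrow> gform br J x x > 0"
    and q_lin: "linear q"
    and q_ker: "{x. q x = 0} = Mspace br"
    and j_lin: "linear j"
    and j_sect: "\<forall>\<phi>. q (j \<phi>) = \<phi>"
    and j_range: "\<forall>\<phi>. j \<phi> \<in> J ` Mspace br"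
begin

abbreviation "om \<equiv> omega br"
abbreviation "g \<equiv> gform br J"
abbreviation "ci \<equiv> cinner br J"
abbreviation "M \<equiv> Mspace br"

lemma om_eq: "om x y = br x y / 2 - br y x / 2" by (simp add: omega_def)

lemma om_bil: "bilinear om"
  unfolding bilinear_def omega_def
  by (auto intro!: linearI simp: bil_addL[OF bil] bil_addR[OF bil] bil_scaleL[OF bil] bil_scaleR[OF bil] field_simps)

lemma om_skew: "om x y = - om y x" by (simp add: omega_def)

lemma JJ: "J (J x) = - x" using J_sq by simp

lemma g_eq: "g x y = 2 * om x (J y)" by (simp add: gform_def)

lemma g_bil: "bilinear g"
  unfolding bilinear_def gform_def
  by (auto intro!: linearI simp: bil_addL[OF om_bil] bil_addR[OF om_bil] bil_scaleL[OF om_bil] bil_scaleR[OF om_bil]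
      linear_add[OF J_lin] linear_scale[OF J_lin])

lemma g_sym: "g x y = g y x"
proof -
  have "g y x = 2 * om y (J x)" by (simp add: g_eq)
  also have "om y (J x) = om (J y) (J (J x))" using J_sympl by simp
  also have "\<dots> = - om (J y) x" by (simp add: JJ bil_minusR[OF om_bil])
  also have "\<dots> = om x (J y)" by (simp add: om_skew[of "J y" x])
  finally show ?thesis by (simp add: g_eq)
qed

lemma gJ: "g (J x) (J y) = g x y"
  using J_sympl by (simp add: g_eq)

lemma g_zero: "g x x = 0 \<longleftrightarrow> x = 0"
  using g_pos by (auto simp: bil_zeroL[OF g_bil])

lemma M_br: "m \<in> M \<Longrightarrow> br x m = 0" by (simp add: Mspace_def)
lemma M_brL: "m \<in> M \<Longrightarrow> br m y = 2 * om m y" by (simp add: om_eq M_br)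
lemma M_diff: "m \<in> M \<Longrightarrow> m' \<in> M \<Longrightarrow> m - m' \<in> M"
  by (simp add: Mspace_def bil_diffR[OF bil])
lemma M_minus: "m \<in> M \<Longrightarrow> - m \<in> M"
  by (simp add: Mspace_def bil_minusR[OF bil])
lemma M_iso: "m \<in> M \<Longrightarrow> m' \<in> M \<Longrightarrow> om m m' = 0"
  by (simp add: om_eq M_br)
lemma qM: "q x = 0 \<longleftrightarrow> x \<in> M" using q_ker by blast

lemma Jj_M: "J (j \<phi>) \<in> M"
proof -
  obtain m where m: "m \<in> M" "j \<phi> = J m" using j_range by blast
  then show ?thesis by (simp add: JJ M_minus)
qed

lemma om_jj: "om (j \<phi>) (j \<psi>) = 0"
proof -
  have "om (J (j \<phi>)) (J (j \<psi>)) = 0" by (rule M_iso[OF Jj_M Jj_M])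
  then show ?thesis using J_sympl by simp
qed

lemma JM_fix:
  assumes "m \<in> M" shows "J m = j (q (J m))"
proof -
  define y where "y = J m - j (q (J m))"
  have "q y = 0" unfolding y_def by (simp add: linear_diff[OF q_lin] j_sect)
  then have yM: "y \<in> M" by (simp add: qM)
  obtain m' where m': "m' \<in> M" "j (q (J m)) = J m'" using j_range by blast
  have "y = J (m - m')" unfolding y_def using m' by (simp add: linear_diff[OF J_lin])
  then have "J y = - (m - m')" by (simp add: JJ)
  then have "g y y = 2 * om y (- (m - m'))" by (simp add: g_eq)
  also have "\<dots> = 0" using M_iso[OF yM M_diff[OF assms m'(1)]] by (simp only: bil_minusR[OF om_bil])
  finally have "y = 0" by (simp add: g_zero)
  then show ?thesis by (simp add: y_def)
qed

definition gQ :: "'q \<Rightarrow> 'q \<Rightarrow> real" where "gQ x y = g (j x) (j y)"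

lemma gQ_bil: "bilinear gQ"
  unfolding bilinear_def gQ_def
  by (auto intro!: linearI simp: bil_addL[OF g_bil] bil_addR[OF g_bil] bil_scaleL[OF g_bil] bil_scaleR[OF g_bil]
      linear_add[OF j_lin] linear_scale[OF j_lin])

lemma gQ_sym: "gQ x y = gQ y x" by (simp add: gQ_def g_sym)

lemma gQ_pos: "x \<noteq> 0 \<Longrightarrow> gQ x x > 0"
proof -
  assume "x \<noteq> 0"
  then have "j x \<noteq> 0" using j_sect by (metis linear_0[OF q_lin])
  then show ?thesis using g_pos by (simp add: gQ_def)
qed

definition R :: "'q \<Rightarrow> 'q" where
  "R = (SOME R. linear R \<and> bij R \<and> (\<forall>x y::'q. gQ (R x) (R y) = x \<bullet> y))"

lemma R_props: "linear R" "bij R" "gQ (R x) (R y) = x \<bullet> y"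
proof -
  have "\<exists>R::'q\<Rightarrow>'q. linear R \<and> bij R \<and> (\<forall>x y::'q. gQ (R x) (R y) = x \<bullet> y)"
    by (rule gs_exists[OF gQ_bil]) (auto simp: gQ_sym gQ_pos)
  then have "linear R \<and> bij R \<and> (\<forall>x y::'q. gQ (R x) (R y) = x \<bullet> y)"
    unfolding R_def by (rule someI_ex)
  then show "linear R" "bij R" "gQ (R x) (R y) = x \<bullet> y" by auto
qed

definition e :: "'q \<Rightarrow> 'l" where "e x = j (R x)"
definition f :: "'q \<Rightarrow> 'l" where "f x = J (e x)"
definition T :: "'q \<times> 'q \<Rightarrow> 'l" where "T z = e (snd z) + f (fst z)"

lemma lin_e: "linear e" unfolding e_def[abs_def] using linear_compose[OF R_props(1) j_lin] by (simp add: o_def)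
lemma lin_f: "linear f" unfolding f_def[abs_def] using linear_compose[OF lin_e J_lin] by (simp add: o_def)
lemma lin_T: "linear T"
  unfolding T_def[abs_def]
  by (auto intro!: linearI simp: linear_add[OF lin_e] linear_add[OF lin_f] linear_scale[OF lin_e] linear_scale[OF lin_f] algebra_simps)

lemma g_ee: "g (e x) (e y) = x \<bullet> y" using R_props(3) by (simp add: e_def gQ_def)
lemma g_ff: "g (f x) (f y) = x \<bullet> y" by (simp add: f_def gJ g_ee)
lemma om_ee: "om (e x) (e y) = 0" by (simp add: e_def om_jj)
lemma om_ff: "om (f x) (f y) = 0" using J_sympl by (simp add: f_def om_ee)
lemma om_ef: "om (e x) (f y) = (x \<bullet> y) / 2" using g_ee[of x y] by (simp add: g_eq f_def)
lemma om_fe: "om (f y) (e x) = - (x \<bullet> y) / 2" using om_ef[of x y] om_skew[of "f y" "e x"] by simp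
lemma g_ef: "g (e x) (f y) = 0"
proof -
  have "g (e x) (f y) = 2 * om (e x) (J (f y))" by (simp add: g_eq)
  also have "J (f y) = - e y" by (simp add: f_def JJ)
  finally show ?thesis by (simp add: bil_minusR[OF om_bil] om_ee)
qed
lemma g_fe: "g (f y) (e x) = 0" using g_ef g_sym by metis
lemma q_e: "q (e x) = R x" by (simp add: e_def j_sect)
lemma f_M: "f x \<in> M" by (simp add: f_def e_def Jj_M)
lemma q_f: "q (f x) = 0" using f_M qM by blast
lemma br_xf: "br v (f y) = 0" by (rule M_br[OF f_M])
lemma br_fx: "br (f y) v = 2 * om (f y) v" by (rule M_brL[OF f_M])

lemma T_pair: "T (a, b) = e b + f a" by (simp add: T_def)

lemma T_g: "g (T (a, b)) (T (a', b')) = a \<bullet> a' + b \<bullet> b'"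
  by (simp add: T_pair bil_addL[OF g_bil] bil_addR[OF g_bil] g_ee g_ff g_ef g_fe inner_commute)

lemma T_om: "om (T (a, b)) (T (a', b')) = (b \<bullet> a' - a \<bullet> b') / 2"
  by (simp add: T_pair bil_addL[OF om_bil] bil_addR[OF om_bil] om_ee om_ff om_ef om_fe inner_commute field_simps)

lemma T_ci: "ci (T (a, b)) (T (a', b')) = complex_of_real (a \<bullet> a' + b \<bullet> b') + \<i> * complex_of_real (b \<bullet> a' - a \<bullet> b')"
  by (simp add: cinner_def T_g T_om)

lemma T_br: "br (T (a, b)) (T (a, b)) = br (e b) (e b) - a \<bullet> b"
proof -
  have "br (T (a, b)) (T (a, b)) = br (e b) (e b) + br (f a) (e b)"
    by (simp add: T_pair bil_addL[OF bil] bil_addR[OF bil] br_xf)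
  also have "br (f a) (e b) = - (a \<bullet> b)" by (simp add: br_fx om_fe inner_commute)
  finally show ?thesis by simp
qed

lemma q_T: "q (T (a, b)) = R b"
  by (simp add: T_pair linear_add[OF q_lin] q_e q_f)

lemma jR: "j (R x) = e x" by (simp add: e_def)

lemma T_inj: "inj T"
proof (rule linear_injective_0[OF lin_T, THEN iffD2], intro allI impI)
  fix z assume "T z = 0"
  then have "g (T z) (T z) = 0" by (simp add: bil_zeroL[OF g_bil])
  then have "fst z \<bullet> fst z + snd z \<bullet> snd z = 0" using T_g[of "fst z" "snd z" "fst z" "snd z"] by simp
  then show "z = 0"
    by (metis add_nonneg_eq_0_iff inner_ge_zero inner_eq_zero_iff prod_eq_iff fst_zero snd_zero)
qed

lemma T_surj: "surj T"
proof -
  have Rs: "surj R" using R_props(2) by (simp add: bij_def)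
  have "\<xi> \<in> range T" for \<xi>
  proof -
    obtain b where b: "R b = q \<xi>" using Rs by (metis surjD)
    define m where "m = \<xi> - e b"
    have "q m = 0" by (simp add: m_def linear_diff[OF q_lin] q_e b)
    then have mM: "m \<in> M" by (simp add: qM)
    obtain a where a: "R a = - q (J m)" using Rs by (metis surjD)
    have "f a = J (j (- q (J m)))" by (simp add: f_def e_def a)
    also have "\<dots> = - J (j (q (J m)))" by (simp add: linear_neg[OF j_lin] linear_neg[OF J_lin])
    also have "\<dots> = - J (J m)" using JM_fix[OF mM] by simp
    also have "\<dots> = m" by (simp add: JJ)
    finally have "T (a, b) = \<xi>" by (simp add: T_pair m_def)
    then show ?thesis by (metis rangeI)
  qed
  then show ?thesis by blast
qed

lemma T_bij: "bij T" using T_inj T_surj by (simp add: bij_def)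

end



context psetup begin

definition s :: "'q \<Rightarrow> real" where "s x = br (e x) (e x)"

lemma T0: "T (0, x) = e x" by (simp add: T_pair linear_0[OF lin_f])

lemma KH_T: "KH br J (T (c, d)) (T (a, b)) =
   exp ((complex_of_real (c \<bullet> a + d \<bullet> b) + \<i> * complex_of_real (d \<bullet> a - c \<bullet> b)) / 2)"
  by (simp add: KH_def T_ci)

lemma Bk_TR: "Bkern br J q j (T (a, b)) (R x) =
   exp (complex_of_real (x \<bullet> b - x \<bullet> x / 2 + (a \<bullet> a - b \<bullet> b) / 4) + \<i> * complex_of_real (x \<bullet> a - s x / 2 - (a \<bullet> b) / 2))"
proof -
  have 1: "ci (j (R x)) (T (a, b)) = complex_of_real (x \<bullet> b) + \<i> * complex_of_real (x \<bullet> a)"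
    using T_ci[of 0 x a b] by (simp add: jR T0[symmetric])
  have 2: "ci (j (q (T (a, b)))) (T (a, b)) = complex_of_real (b \<bullet> b) + \<i> * complex_of_real (b \<bullet> a)"
    using T_ci[of 0 b a b] by (simp add: q_T jR T0[symmetric])
  have 3: "g (j (R x)) (j (R x)) = x \<bullet> x" by (simp add: jR g_ee)
  have 4: "g (T (a, b)) (T (a, b)) = a \<bullet> a + b \<bullet> b" by (simp add: T_g)
  have 5: "br (j (R x)) (j (R x)) = s x" by (simp add: jR s_def)
  show ?thesis unfolding Bkern_def 1 2 3 4 5
    by (rule arg_cong[where f=exp]) (simp add: complex_eq_iff inner_commute field_simps)
qed

lemma al_T: "alpha br J (T (a, b)) = exp (complex_of_real (- (a \<bullet> a + b \<bullet> b) / 4) + \<i> * complex_of_real ((s b - a \<bullet> b) / 2))"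
  unfolding alpha_def T_br T_g s_def[symmetric]
  by (rule arg_cong[where f=exp]) (simp add: complex_eq_iff field_simps)

definition Tinv where "Tinv = inv T"
definition Rinv where "Rinv = inv R"

lemma Tinv: "linear Tinv" "T (Tinv \<xi>) = \<xi>" "Tinv (T z) = z"
  unfolding Tinv_def using linear_inv_bij[OF lin_T T_bij] T_bij
  by (auto simp: bij_def surj_f_inv_f inv_f_f)

lemma Rinv: "linear Rinv" "R (Rinv \<phi>) = \<phi>" "Rinv (R x) = x"
  unfolding Rinv_def using linear_inv_bij[OF R_props(1) R_props(2)] R_props(2)
  by (auto simp: bij_def surj_f_inv_f inv_f_f)

lemma meas_T:
  fixes h :: "'l \<Rightarrow> 'b::{banach,second_countable_topology}"
  assumes "\<And>z. h (T z) = H z" and "H \<in> borel_measurable borel"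
  shows "h \<in> borel_measurable borel"
proof -
  have "h = (\<lambda>\<xi>. H (Tinv \<xi>))" using assms(1) Tinv(2) by (metis)
  moreover have "Tinv \<in> borel_measurable borel" by (rule lin_cont_meas[OF Tinv(1)])
  ultimately show ?thesis using assms(2) by (simp add: measurable_compose)
qed

lemma meas_R:
  fixes h :: "'q \<Rightarrow> 'b::{banach,second_countable_topology}"
  assumes "\<And>x. h (R x) = H x" and "H \<in> borel_measurable borel"
  shows "h \<in> borel_measurable borel"
proof -
  have "h = (\<lambda>\<xi>. H (Rinv \<xi>))" using assms(1) Rinv(2) by (metis)
  moreover have "Rinv \<in> borel_measurable borel" by (rule lin_cont_meas[OF Rinv(1)])
  ultimately show ?thesis using assms(2) by (simp add: measurable_compose)
qed

definition cL :: real where "cL = (SOME c. c > 0 \<and> lborel = density (distr lborel borel T) (\<lambda>_. ennreal c))"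
definition cQ :: real where "cQ = (SOME c. c > 0 \<and> lborel = density (distr lborel borel R) (\<lambda>_. ennreal c))"

lemma cL: "cL > 0" "(lborel :: 'l measure) = density (distr lborel borel T) (\<lambda>_. ennreal cL)"
proof -
  have "cL > 0 \<and> (lborel :: 'l measure) = density (distr lborel borel T) (\<lambda>_. ennreal cL)"
    unfolding cL_def by (rule someI_ex) (rule lcv[OF lin_T T_bij])
  then show "cL > 0" "(lborel :: 'l measure) = density (distr lborel borel T) (\<lambda>_. ennreal cL)" by auto
qed

lemma cQ: "cQ > 0" "(lborel :: 'q measure) = density (distr lborel borel R) (\<lambda>_. ennreal cQ)"
proof -
  have "cQ > 0 \<and> (lborel :: 'q measure) = density (distr lborel borel R) (\<lambda>_. ennreal cQ)"
    unfolding cQ_def by (rule someI_ex) (rule lcv[OF R_props(1) R_props(2)])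
  then show "cQ > 0" "(lborel :: 'q measure) = density (distr lborel borel R) (\<lambda>_. ennreal cQ)" by auto
qed

lemma transfer_gen:
  fixes h :: "'a::euclidean_space \<Rightarrow> 'b::{banach,second_countable_topology}" and F :: "'c::euclidean_space \<Rightarrow> 'a"
  assumes eq: "(lborel :: 'a measure) = density (distr lborel borel F) (\<lambda>_. ennreal c)" and c: "c > 0"
    and Fm: "F \<in> borel_measurable borel" and hm: "h \<in> borel_measurable borel"
  shows "integrable lborel h \<longleftrightarrow> integrable lborel (\<lambda>z. h (F z))"
    and "integral\<^sup>L lborel h = c *\<^sub>R integral\<^sup>L lborel (\<lambda>z. h (F z))"
proof -
  have hm': "h \<in> borel_measurable (distr lborel borel F)" using hm by simp
  have "integrable lborel h \<longleftrightarrow> integrable (density (distr lborel borel F) (\<lambda>_. ennreal c)) h"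
    by (subst eq) simp
  also have "\<dots> \<longleftrightarrow> integrable (distr lborel borel F) (\<lambda>x. c *\<^sub>R h x)"
    using c hm' by (intro integrable_density) auto
  also have "\<dots> \<longleftrightarrow> integrable (distr lborel borel F) h"
  proof
    assume "integrable (distr lborel borel F) (\<lambda>x. c *\<^sub>R h x)"
    then have "integrable (distr lborel borel F) (\<lambda>x. (1/c) *\<^sub>R (c *\<^sub>R h x))" by (rule integrable_scaleR_right)
    then show "integrable (distr lborel borel F) h" using c by simp
  qed (rule integrable_scaleR_right)
  also have "\<dots> \<longleftrightarrow> integrable lborel (\<lambda>z. h (F z))"
    using Fm hm by (simp add: integrable_distr_eq)
  finally show "integrable lborel h \<longleftrightarrow> integrable lborel (\<lambda>z. h (F z))" .
  have "integral\<^sup>L lborel h = integral\<^sup>L (density (distr lborel borel F) (\<lambda>_. ennreal c)) h"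
    by (subst eq) simp
  also have "\<dots> = integral\<^sup>L (distr lborel borel F) (\<lambda>x. c *\<^sub>R h x)"
    using c hm' by (intro integral_density) auto
  also have "\<dots> = c *\<^sub>R integral\<^sup>L (distr lborel borel F) h" by simp
  also have "integral\<^sup>L (distr lborel borel F) h = integral\<^sup>L lborel (\<lambda>z. h (F z))"
    using Fm hm by (simp add: integral_distr)
  finally show "integral\<^sup>L lborel h = c *\<^sub>R integral\<^sup>L lborel (\<lambda>z. h (F z))" .
qed

lemmas transL = transfer_gen[OF cL(2) cL(1) lin_cont_meas[OF lin_T]]
lemmas transQ = transfer_gen[OF cQ(2) cQ(1) lin_cont_meas[OF R_props(1)]]


lemma gaussE_real:
  fixes p :: real assumes p: "p > 0"
  shows "integrable lborel (\<lambda>x::'a::euclidean_space. exp (- p * (norm x)\<^sup>2))"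
    and "integral\<^sup>L lborel (\<lambda>x::'a::euclidean_space. exp (- p * (norm x)\<^sup>2)) = sqrt (pi / p) ^ DIM('a)"
proof -
  have eq: "(\<lambda>x::'a. exp (complex_of_real (- p * (norm x)\<^sup>2) + complex_of_real (0 \<bullet> x) + \<i> * complex_of_real (0 \<bullet> x)))
     = (\<lambda>x. complex_of_real (exp (- p * (norm x)\<^sup>2)))"
    by (simp only: inner_zero_left of_real_0 mult_zero_right add_0_right exp_of_real)
  have "integrable lborel (\<lambda>x::'a. complex_of_real (exp (- p * (norm x)\<^sup>2)))" using gaussE(1)[OF p, of "0::'a" "0::'a"] by (simp only: eq)
  from integrable_Re[OF this] show "integrable lborel (\<lambda>x::'a::euclidean_space. exp (- p * (norm x)\<^sup>2))" by simp
  have "complex_of_real (integral\<^sup>L lborel (\<lambda>x::'a. exp (- p * (norm x)\<^sup>2))) = complex_of_real (sqrt (pi / p) ^ DIM('a))"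
    using gaussE(2)[OF p, of "0::'a" "0::'a"] unfolding eq by simp
  then show "integral\<^sup>L lborel (\<lambda>x::'a::euclidean_space. exp (- p * (norm x)\<^sup>2)) = sqrt (pi / p) ^ DIM('a)"
    using of_real_eq_iff by blast
qed

lemma normsq_pair: "(norm z)\<^sup>2 = fst z \<bullet> fst z + snd z \<bullet> snd z"
  by (cases z) (simp add: norm_Pair power2_norm_eq_inner)

lemma gTz: "g (T z) (T z) = (norm z)\<^sup>2"
  by (cases z) (simp add: T_g normsq_pair)


definition ZL :: real where "ZL = integral\<^sup>L lborel (\<lambda>\<xi>::'l. exp (- g \<xi> \<xi> / 2))"
definition ZQ :: real where "ZQ = integral\<^sup>L lborel (\<lambda>\<phi>::'q. exp (- g (j \<phi>) (j \<phi>)))"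

lemma gm: "(\<lambda>\<xi>. exp (- g \<xi> \<xi> / 2)) \<in> borel_measurable borel"
  by (rule meas_T[where H="\<lambda>z. exp (- (norm z)\<^sup>2 / 2)"]) (auto simp: gTz intro: borel_measurable_continuous_onI continuous_intros)

lemma gQm: "(\<lambda>\<phi>. exp (- g (j \<phi>) (j \<phi>))) \<in> borel_measurable borel"
  by (rule meas_R[where H="\<lambda>x. exp (- (norm x)\<^sup>2)"]) (auto simp: jR g_ee power2_norm_eq_inner intro: borel_measurable_continuous_onI continuous_intros)

lemma ZL_val: "ZL = cL * sqrt (2 * pi) ^ (DIM('q) + DIM('q))"
proof -
  have "ZL = cL * integral\<^sup>L lborel (\<lambda>z::'q\<times>'q. exp (- (1/2) * (norm z)\<^sup>2))"
    unfolding ZL_def transL(2)[OF gm] by (simp add: gTz)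
  also have "integral\<^sup>L lborel (\<lambda>z::'q\<times>'q. exp (- (1/2) * (norm z)\<^sup>2)) = sqrt (2 * pi) ^ (DIM('q) + DIM('q))"
    using gaussE_real(2)[of "1/2", where 'a="'q\<times>'q"] by (simp add: mult.commute)
  finally show ?thesis .
qed

lemma ZQ_val: "ZQ = cQ * sqrt pi ^ DIM('q)"
proof -
  have "ZQ = cQ * integral\<^sup>L lborel (\<lambda>x::'q. exp (- 1 * (norm x)\<^sup>2))"
    unfolding ZQ_def transQ(2)[OF gQm] by (simp add: jR g_ee power2_norm_eq_inner)
  also have "integral\<^sup>L lborel (\<lambda>x::'q. exp (- 1 * (norm x)\<^sup>2)) = sqrt pi ^ DIM('q)"
    using gaussE_real(2)[of 1, where 'a="'q"] by simp
  finally show ?thesis .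
qed

lemma ZL_pos: "ZL > 0" using cL(1) by (simp add: ZL_val)
lemma ZQ_pos: "ZQ > 0" using cQ(1) by (simp add: ZQ_val)

lemma muL_eq: "muL br J = density lborel (\<lambda>_. ennreal (1 / ZL))" by (simp add: muL_def ZL_def)
lemma muQ_eq: "muQ br J j = density lborel (\<lambda>_. ennreal (1 / ZQ))" by (simp add: muQ_def ZQ_def)
lemma nuL_eq: "nuL br J = density (muL br J) (\<lambda>\<xi>. ennreal (exp (- g \<xi> \<xi> / 2)))" by (simp add: nuL_def)

lemma muL_int:
  fixes h :: "'l \<Rightarrow> 'b::{banach,second_countable_topology}"
  assumes hm: "h \<in> borel_measurable borel"
  shows "integrable (muL br J) h \<longleftrightarrow> integrable lborel (\<lambda>z. h (T z))"
    and "integral\<^sup>L (muL br J) h = (1 / sqrt (2 * pi) ^ (DIM('q) + DIM('q))) *\<^sub>R integral\<^sup>L lborel (\<lambda>z. h (T z))"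
proof -
  have "integrable (muL br J) h \<longleftrightarrow> integrable lborel (\<lambda>x. (1 / ZL) *\<^sub>R h x)"
    unfolding muL_eq using ZL_pos hm by (intro integrable_density) auto
  also have "\<dots> \<longleftrightarrow> integrable lborel h"
  proof
    assume "integrable lborel (\<lambda>x. (1 / ZL) *\<^sub>R h x)"
    then have "integrable lborel (\<lambda>x. ZL *\<^sub>R ((1 / ZL) *\<^sub>R h x))" by (rule integrable_scaleR_right)
    then show "integrable lborel h" using ZL_pos by simp
  qed (rule integrable_scaleR_right)
  finally show "integrable (muL br J) h \<longleftrightarrow> integrable lborel (\<lambda>z. h (T z))" using transL(1)[OF hm] by simp
  have "integral\<^sup>L (muL br J) h = integral\<^sup>L lborel (\<lambda>x. (1 / ZL) *\<^sub>R h x)"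
    unfolding muL_eq using ZL_pos hm by (intro integral_density) auto
  also have "\<dots> = (1 / ZL) *\<^sub>R (cL *\<^sub>R integral\<^sup>L lborel (\<lambda>z. h (T z)))" by (simp add: transL(2)[OF hm])
  also have "\<dots> = (1 / sqrt (2 * pi) ^ (DIM('q) + DIM('q))) *\<^sub>R integral\<^sup>L lborel (\<lambda>z. h (T z))"
    using cL(1) by (simp add: ZL_val)
  finally show "integral\<^sup>L (muL br J) h = (1 / sqrt (2 * pi) ^ (DIM('q) + DIM('q))) *\<^sub>R integral\<^sup>L lborel (\<lambda>z. h (T z))" .
qed

lemma muQ_int:
  fixes h :: "'q \<Rightarrow> 'b::{banach,second_countable_topology}"
  assumes hm: "h \<in> borel_measurable borel"
  shows "integrable (muQ br J j) h \<longleftrightarrow> integrable lborel (\<lambda>x. h (R x))"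
    and "integral\<^sup>L (muQ br J j) h = (1 / sqrt pi ^ DIM('q)) *\<^sub>R integral\<^sup>L lborel (\<lambda>x. h (R x))"
proof -
  have "integrable (muQ br J j) h \<longleftrightarrow> integrable lborel (\<lambda>x. (1 / ZQ) *\<^sub>R h x)"
    unfolding muQ_eq using ZQ_pos hm by (intro integrable_density) auto
  also have "\<dots> \<longleftrightarrow> integrable lborel h"
  proof
    assume "integrable lborel (\<lambda>x. (1 / ZQ) *\<^sub>R h x)"
    then have "integrable lborel (\<lambda>x. ZQ *\<^sub>R ((1 / ZQ) *\<^sub>R h x))" by (rule integrable_scaleR_right)
    then show "integrable lborel h" using ZQ_pos by simp
  qed (rule integrable_scaleR_right)
  finally show "integrable (muQ br J j) h \<longleftrightarrow> integrable lborel (\<lambda>x. h (R x))" using transQ(1)[OF hm] by simp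
  have "integral\<^sup>L (muQ br J j) h = integral\<^sup>L lborel (\<lambda>x. (1 / ZQ) *\<^sub>R h x)"
    unfolding muQ_eq using ZQ_pos hm by (intro integral_density) auto
  also have "\<dots> = (1 / ZQ) *\<^sub>R (cQ *\<^sub>R integral\<^sup>L lborel (\<lambda>x. h (R x)))" by (simp add: transQ(2)[OF hm])
  also have "\<dots> = (1 / sqrt pi ^ DIM('q)) *\<^sub>R integral\<^sup>L lborel (\<lambda>x. h (R x))"
    using cQ(1) by (simp add: ZQ_val)
  finally show "integral\<^sup>L (muQ br J j) h = (1 / sqrt pi ^ DIM('q)) *\<^sub>R integral\<^sup>L lborel (\<lambda>x. h (R x))" .
qed

lemma nuL_int:
  fixes h :: "'l \<Rightarrow> 'b::{banach,second_countable_topology}"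
  assumes hm: "h \<in> borel_measurable borel"
  shows "integrable (nuL br J) h \<longleftrightarrow> integrable lborel (\<lambda>z. exp (- (norm z)\<^sup>2 / 2) *\<^sub>R h (T z))"
    and "integral\<^sup>L (nuL br J) h = (1 / sqrt (2 * pi) ^ (DIM('q) + DIM('q))) *\<^sub>R integral\<^sup>L lborel (\<lambda>z. exp (- (norm z)\<^sup>2 / 2) *\<^sub>R h (T z))"
proof -
  have hm2: "(\<lambda>\<xi>. exp (- g \<xi> \<xi> / 2) *\<^sub>R h \<xi>) \<in> borel_measurable borel" using gm hm by measurable
  have "integrable (nuL br J) h \<longleftrightarrow> integrable (muL br J) (\<lambda>\<xi>. exp (- g \<xi> \<xi> / 2) *\<^sub>R h \<xi>)"
    unfolding nuL_eq using gm hm by (intro integrable_density) (auto simp: muL_eq)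
  also have "\<dots> \<longleftrightarrow> integrable lborel (\<lambda>z. exp (- (norm z)\<^sup>2 / 2) *\<^sub>R h (T z))"
    by (subst muL_int(1)[OF hm2]) (simp add: gTz)
  finally show "integrable (nuL br J) h \<longleftrightarrow> integrable lborel (\<lambda>z. exp (- (norm z)\<^sup>2 / 2) *\<^sub>R h (T z))" .
  have "integral\<^sup>L (nuL br J) h = integral\<^sup>L (muL br J) (\<lambda>\<xi>. exp (- g \<xi> \<xi> / 2) *\<^sub>R h \<xi>)"
    unfolding nuL_eq using gm hm by (intro integral_density) (auto simp: muL_eq)
  also have "\<dots> = (1 / sqrt (2 * pi) ^ (DIM('q) + DIM('q))) *\<^sub>R integral\<^sup>L lborel (\<lambda>z. exp (- (norm z)\<^sup>2 / 2) *\<^sub>R h (T z))"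
    by (subst muL_int(2)[OF hm2]) (simp add: gTz)
  finally show "integral\<^sup>L (nuL br J) h = (1 / sqrt (2 * pi) ^ (DIM('q) + DIM('q))) *\<^sub>R integral\<^sup>L lborel (\<lambda>z. exp (- (norm z)\<^sup>2 / 2) *\<^sub>R h (T z))" .
qed

end


lemma expR: "exp (x::real) *\<^sub>R exp (w::complex) = exp (complex_of_real x + w)"
  by (simp add: scaleR_conv_of_real exp_add exp_of_real)


lemma final_alg:
  fixes A x :: real and E E' :: complex
  assumes "x \<noteq> 0" "A = x" "E = E'"
  shows "(1 / x) *\<^sub>R (complex_of_real A * exp E) = exp E'"
  using assms by (simp add: scaleR_conv_of_real)

lemma final_alg2:
  fixes A x :: real and E0 E E' :: complex
  assumes "x \<noteq> 0" "A = x" "E0 + E = E'"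
  shows "(1 / x) *\<^sub>R (exp E0 * (complex_of_real A * exp E)) = exp E'"
  using assms by (simp add: scaleR_conv_of_real) (metis add.commute exp_add)

lemma num_gen:
  fixes k :: real assumes k: "k\<^sup>2 = 1/4"
  shows "sqrt (pi / (3/4)) ^ N * sqrt (pi / (1/4 + k\<^sup>2 / (4 * (3/4)))) ^ N = sqrt (2 * pi) ^ (N + N)"
proof -
  have "sqrt (pi / (3/4)) * sqrt (pi / (1/4 + k\<^sup>2 / (4 * (3/4)))) = sqrt ((2 * pi)\<^sup>2)"
    unfolding k real_sqrt_mult[symmetric] by (simp add: power2_eq_square field_simps)
  also have "\<dots> = 2 * pi" by (subst real_sqrt_abs) simp
  finally have 1: "sqrt (pi / (3/4)) * sqrt (pi / (1/4 + k\<^sup>2 / (4 * (3/4)))) = 2 * pi" .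
  have 2: "sqrt (2 * pi) ^ (N + N) = (2 * pi) ^ N"
    by (simp add: power_add[symmetric] mult_2[symmetric] power_mult)
  show ?thesis unfolding 2 power_mult_distrib[symmetric] 1 ..
qed

lemma num_Q: "sqrt (pi / 1) ^ N = sqrt pi ^ N" by simp

context psetup begin

lemma cont_meas_pair: "continuous_on UNIV H \<Longrightarrow> (H :: 'q\<times>'q \<Rightarrow> complex) \<in> borel_measurable borel"
  by (rule borel_measurable_continuous_onI)

lemma C3:
  fixes c d c' d' :: 'q
  defines "h \<equiv> (\<lambda>\<xi>. cnj (KH br J (T (c', d')) \<xi>) * KH br J (T (c, d)) \<xi>)"
  shows "integrable (nuL br J) h" and "integral\<^sup>L (nuL br J) h = KH br J (T (c, d)) (T (c', d'))"
proof -
  let ?ua = "(1/2) *\<^sub>R (c' + c)" and ?ub = "(1/2) *\<^sub>R (d' + d)" and ?va = "(1/2) *\<^sub>R (d - d')" and ?vb = "(1/2) *\<^sub>R (c' - c)"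
  define F where "F \<equiv> (\<lambda>z::'q\<times>'q. exp (complex_of_real (- (1/2) * (norm (fst z))\<^sup>2 - (1/2) * (norm (snd z))\<^sup>2 + ?ua \<bullet> fst z + ?ub \<bullet> snd z)
                  + \<i> * complex_of_real (0 * (fst z \<bullet> snd z) + ?va \<bullet> fst z + ?vb \<bullet> snd z)))"
  have pw: "exp (- (norm z)\<^sup>2 / 2) *\<^sub>R h (T z) = F z" for z
  proof (cases z)
    case (Pair a b)
    show ?thesis unfolding Pair h_def KH_T F_def
      apply (simp only: exp_cnj mult_exp_exp expR)
      apply (rule arg_cong[where f=exp])
      apply (simp add: complex_eq_iff normsq_pair power2_norm_eq_inner inner_add_left inner_add_right inner_diff_left inner_diff_right inner_commute field_simps)
      done
  qed
  have hm: "h \<in> borel_measurable borel"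
  proof (rule meas_T)
    show "h (T z) = (\<lambda>z. exp ((norm z)\<^sup>2 / 2) *\<^sub>R F z) z" for z
    proof -
      have "exp ((norm z)\<^sup>2 / 2) *\<^sub>R F z = exp ((norm z)\<^sup>2 / 2) *\<^sub>R (exp (- (norm z)\<^sup>2 / 2) *\<^sub>R h (T z))"
        by (simp only: pw)
      also have "\<dots> = h (T z)" by (simp add: exp_minus_inverse exp_minus)
      finally show ?thesis by simp
    qed
    have Fm: "F \<in> borel_measurable borel" unfolding F_def by (intro borel_measurable_continuous_onI continuous_intros)
    show "(\<lambda>z. exp ((norm z)\<^sup>2 / 2) *\<^sub>R F z) \<in> borel_measurable borel"
      using Fm by measurable
  qed
  have hp: "(1/2::real) > 0" by simp
  note G = gaussPair[where pa="1/2" and pb="1/2" and k=0 and ua="?ua" and ub="?ub" and va="?va" and vb="?vb", OF hp hp, folded F_def]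
  show "integrable (nuL br J) h" unfolding nuL_int(1)[OF hm] pw by (rule G(1))
  have "integral\<^sup>L (nuL br J) h = (1 / sqrt (2 * pi) ^ (DIM('q) + DIM('q))) *\<^sub>R integral\<^sup>L lborel F"
    unfolding nuL_int(2)[OF hm] pw ..
  also have "\<dots> = KH br J (T (c, d)) (T (c', d'))"
    unfolding G(2) KH_T
  proof (rule final_alg)
    show "sqrt (2 * pi) ^ (DIM('q) + DIM('q)) \<noteq> 0" by simp
    show "sqrt (pi / (1/2)) ^ DIM('q) * sqrt (pi / (1/2 + 0\<^sup>2 / (4 * (1/2)))) ^ DIM('q) = sqrt (2 * pi) ^ (DIM('q) + DIM('q))"
      by (simp add: power_add mult.commute)
  qed (simp add: complex_eq_iff power2_norm_eq_inner inner_add_left inner_add_right inner_diff_left inner_diff_right inner_commute field_simps)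
  finally show "integral\<^sup>L (nuL br J) h = KH br J (T (c, d)) (T (c', d'))" .
qed


lemma Bk_cnj_TR: "cnj (Bkern br J q j (T (a, b)) (R x)) =
   exp (complex_of_real (x \<bullet> b - x \<bullet> x / 2 + (a \<bullet> a - b \<bullet> b) / 4) - \<i> * complex_of_real (x \<bullet> a - s x / 2 - (a \<bullet> b) / 2))"
  unfolding Bk_TR exp_cnj by simp

lemma C1:
  fixes c d x :: 'q
  defines "h \<equiv> (\<lambda>\<xi>. KH br J (T (c, d)) \<xi> * cnj (Bkern br J q j \<xi> (R x)))"
  shows "integrable (nuL br J) h" and "integral\<^sup>L (nuL br J) h = cnj (Bkern br J q j (T (c, d)) (R x))"
proof -
  let ?ua = "(1/2) *\<^sub>R c" and ?ub = "(1/2) *\<^sub>R d + x" and ?va = "(1/2) *\<^sub>R d - x" and ?vb = "- (1/2) *\<^sub>R c"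
  define K0 where "K0 = complex_of_real (- (x \<bullet> x) / 2) + \<i> * complex_of_real (s x / 2)"
  define F where "F \<equiv> (\<lambda>z::'q\<times>'q. exp (complex_of_real (- (1/4) * (norm (fst z))\<^sup>2 - (3/4) * (norm (snd z))\<^sup>2 + ?ua \<bullet> fst z + ?ub \<bullet> snd z)
                  + \<i> * complex_of_real ((1/2) * (fst z \<bullet> snd z) + ?va \<bullet> fst z + ?vb \<bullet> snd z)))"
  have pw: "exp (- (norm z)\<^sup>2 / 2) *\<^sub>R h (T z) = exp K0 * F z" for z
  proof (cases z)
    case (Pair a b)
    show ?thesis unfolding Pair h_def KH_T F_def Bk_cnj_TR K0_def
      apply (simp only: exp_cnj mult_exp_exp expR)
      apply (rule arg_cong[where f=exp])
      apply (simp add: complex_eq_iff normsq_pair power2_norm_eq_inner inner_add_left inner_add_right inner_diff_left inner_diff_right inner_commute field_simps)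
      done
  qed
  have Fm: "F \<in> borel_measurable borel" unfolding F_def by (intro borel_measurable_continuous_onI continuous_intros)
  have hm: "h \<in> borel_measurable borel"
  proof (rule meas_T)
    show "h (T z) = (\<lambda>z. exp ((norm z)\<^sup>2 / 2) *\<^sub>R (exp K0 * F z)) z" for z
    proof -
      have "exp ((norm z)\<^sup>2 / 2) *\<^sub>R (exp K0 * F z) = exp ((norm z)\<^sup>2 / 2) *\<^sub>R (exp (- (norm z)\<^sup>2 / 2) *\<^sub>R h (T z))"
        by (simp only: pw)
      also have "\<dots> = h (T z)" by (simp add: exp_minus_inverse exp_minus)
      finally show ?thesis by simp
    qed
    show "(\<lambda>z. exp ((norm z)\<^sup>2 / 2) *\<^sub>R (exp K0 * F z)) \<in> borel_measurable borel"
      using Fm by measurable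
  qed
  have hp: "(1/4::real) > 0" "(3/4::real) > 0" by simp_all
  note G = gaussPair[where pa="1/4" and pb="3/4" and k="1/2" and ua="?ua" and ub="?ub" and va="?va" and vb="?vb", OF hp, folded F_def]
  show "integrable (nuL br J) h" unfolding nuL_int(1)[OF hm] pw by (intro integrable_mult_right G(1))
  have "integral\<^sup>L (nuL br J) h = (1 / sqrt (2 * pi) ^ (DIM('q) + DIM('q))) *\<^sub>R (exp K0 * integral\<^sup>L lborel F)"
    unfolding nuL_int(2)[OF hm] pw integral_mult_right_zero ..
  also have "\<dots> = cnj (Bkern br J q j (T (c, d)) (R x))"
    unfolding G(2) Bk_cnj_TR
  proof (rule final_alg2)
    show "sqrt (2 * pi) ^ (DIM('q) + DIM('q)) \<noteq> 0" by simp
    show "sqrt (pi / (3/4)) ^ DIM('q) * sqrt (pi / (1/4 + (1/2)\<^sup>2 / (4 * (3/4)))) ^ DIM('q) = sqrt (2 * pi) ^ (DIM('q) + DIM('q))"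
      by (rule num_gen) (simp add: power2_eq_square)
  qed (simp add: K0_def complex_eq_iff power2_norm_eq_inner inner_add_left inner_add_right inner_diff_left inner_diff_right inner_commute field_simps)
  finally show "integral\<^sup>L (nuL br J) h = cnj (Bkern br J q j (T (c, d)) (R x))" .
qed


lemma C2:
  fixes c d a b :: 'q
  defines "h \<equiv> (\<lambda>\<phi>. cnj (Bkern br J q j (T (c, d)) \<phi>) * Bkern br J q j (T (a, b)) \<phi>)"
  shows "integrable (muQ br J j) h" and "integral\<^sup>L (muQ br J j) h = KH br J (T (c, d)) (T (a, b))"
proof -
  let ?u = "d + b" and ?v = "a - c"
  define K0 where "K0 = complex_of_real ((c \<bullet> c - d \<bullet> d + a \<bullet> a - b \<bullet> b) / 4) + \<i> * complex_of_real ((c \<bullet> d - a \<bullet> b) / 2)"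
  define F where "F \<equiv> (\<lambda>x::'q. exp (complex_of_real (- 1 * (norm x)\<^sup>2) + complex_of_real (?u \<bullet> x) + \<i> * complex_of_real (?v \<bullet> x)))"
  have pw: "h (R x) = exp K0 * F x" for x
    unfolding h_def F_def Bk_cnj_TR Bk_TR K0_def
    apply (simp only: exp_cnj mult_exp_exp)
    apply (rule arg_cong[where f=exp])
    apply (simp add: complex_eq_iff power2_norm_eq_inner inner_add_left inner_add_right inner_diff_left inner_diff_right inner_commute field_simps)
    done
  have Fm: "F \<in> borel_measurable borel" unfolding F_def by (intro borel_measurable_continuous_onI continuous_intros)
  have hm: "h \<in> borel_measurable borel"
    by (rule meas_R[where H="\<lambda>x. exp K0 * F x"]) (use pw Fm in auto)
  have hp: "(1::real) > 0" by simp
  note G = gaussE[where p=1 and u="?u" and v="?v", OF hp, folded F_def]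
  show "integrable (muQ br J j) h" unfolding muQ_int(1)[OF hm] pw by (intro integrable_mult_right G(1))
  have "integral\<^sup>L (muQ br J j) h = (1 / sqrt pi ^ DIM('q)) *\<^sub>R (exp K0 * integral\<^sup>L lborel F)"
    unfolding muQ_int(2)[OF hm] pw integral_mult_right_zero ..
  also have "\<dots> = KH br J (T (c, d)) (T (a, b))"
    unfolding G(2) KH_T
  proof (rule final_alg2)
    show "sqrt pi ^ DIM('q) \<noteq> 0" by simp
    show "sqrt (pi / 1) ^ DIM('q) = sqrt pi ^ DIM('q)" by simp
  qed (simp add: K0_def complex_eq_iff power2_norm_eq_inner inner_add_left inner_add_right inner_diff_left inner_diff_right inner_commute field_simps)
  finally show "integral\<^sup>L (muQ br J j) h = KH br J (T (c, d)) (T (a, b))" .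
qed

lemma C4:
  fixes c d c' d' :: 'q
  defines "h \<equiv> (\<lambda>\<phi>. Bkern br J q j (T (c', d')) \<phi> * cnj (Bkern br J q j (T (c, d)) \<phi>))"
  shows "integrable (muQ br J j) h" and "integral\<^sup>L (muQ br J j) h = KH br J (T (c, d)) (T (c', d'))"
proof -
  let ?u = "d' + d" and ?v = "c' - c"
  define K0 where "K0 = complex_of_real ((c' \<bullet> c' - d' \<bullet> d' + c \<bullet> c - d \<bullet> d) / 4) + \<i> * complex_of_real ((c \<bullet> d - c' \<bullet> d') / 2)"
  define F where "F \<equiv> (\<lambda>x::'q. exp (complex_of_real (- 1 * (norm x)\<^sup>2) + complex_of_real (?u \<bullet> x) + \<i> * complex_of_real (?v \<bullet> x)))"
  have pw: "h (R x) = exp K0 * F x" for x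
    unfolding h_def F_def Bk_cnj_TR Bk_TR K0_def
    apply (simp only: exp_cnj mult_exp_exp)
    apply (rule arg_cong[where f=exp])
    apply (simp add: complex_eq_iff power2_norm_eq_inner inner_add_left inner_add_right inner_diff_left inner_diff_right inner_commute field_simps)
    done
  have Fm: "F \<in> borel_measurable borel" unfolding F_def by (intro borel_measurable_continuous_onI continuous_intros)
  have hm: "h \<in> borel_measurable borel"
    by (rule meas_R[where H="\<lambda>x. exp K0 * F x"]) (use pw Fm in auto)
  have hp: "(1::real) > 0" by simp
  note G = gaussE[where p=1 and u="?u" and v="?v", OF hp, folded F_def]
  show "integrable (muQ br J j) h" unfolding muQ_int(1)[OF hm] pw by (intro integrable_mult_right G(1))
  have "integral\<^sup>L (muQ br J j) h = (1 / sqrt pi ^ DIM('q)) *\<^sub>R (exp K0 * integral\<^sup>L lborel F)"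
    unfolding muQ_int(2)[OF hm] pw integral_mult_right_zero ..
  also have "\<dots> = KH br J (T (c, d)) (T (c', d'))"
    unfolding G(2) KH_T
  proof (rule final_alg2)
    show "sqrt pi ^ DIM('q) \<noteq> 0" by simp
    show "sqrt (pi / 1) ^ DIM('q) = sqrt pi ^ DIM('q)" by simp
  qed (simp add: K0_def complex_eq_iff power2_norm_eq_inner inner_add_left inner_add_right inner_diff_left inner_diff_right inner_commute field_simps)
  finally show "integral\<^sup>L (muQ br J j) h = KH br J (T (c, d)) (T (c', d'))" .
qed

lemma al_cnj_T: "cnj (alpha br J (T (a, b))) = exp (complex_of_real (- (a \<bullet> a + b \<bullet> b) / 4) - \<i> * complex_of_real ((s b - a \<bullet> b) / 2))"
  unfolding al_T exp_cnj by simp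

lemma C5:
  fixes c d c' d' :: 'q
  defines "h \<equiv> (\<lambda>\<xi>. cnj (KH br J (T (c', d')) \<xi>) * cnj (Bkern br J q j (T (c, d)) (q \<xi>)) * cnj (alpha br J \<xi>))"
  shows "integrable (muL br J) h" and "integral\<^sup>L (muL br J) h = KH br J (T (c, d)) (T (c', d'))"
proof -
  let ?ua = "(1/2) *\<^sub>R c'" and ?ub = "(1/2) *\<^sub>R d' + d" and ?va = "- (1/2) *\<^sub>R d'" and ?vb = "(1/2) *\<^sub>R c' - c"
  define K0 where "K0 = complex_of_real ((c \<bullet> c - d \<bullet> d) / 4) + \<i> * complex_of_real (c \<bullet> d / 2)"
  define F where "F \<equiv> (\<lambda>z::'q\<times>'q. exp (complex_of_real (- (1/4) * (norm (fst z))\<^sup>2 - (3/4) * (norm (snd z))\<^sup>2 + ?ua \<bullet> fst z + ?ub \<bullet> snd z)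
                  + \<i> * complex_of_real ((1/2) * (fst z \<bullet> snd z) + ?va \<bullet> fst z + ?vb \<bullet> snd z)))"
  have pw: "h (T z) = exp K0 * F z" for z
  proof (cases z)
    case (Pair a b)
    show ?thesis unfolding Pair h_def KH_T F_def q_T Bk_cnj_TR al_cnj_T K0_def
      apply (simp only: exp_cnj mult_exp_exp)
      apply (rule arg_cong[where f=exp])
      apply (simp add: complex_eq_iff normsq_pair power2_norm_eq_inner inner_add_left inner_add_right inner_diff_left inner_diff_right inner_commute field_simps)
      done
  qed
  have Fm: "F \<in> borel_measurable borel" unfolding F_def by (intro borel_measurable_continuous_onI continuous_intros)
  have hm: "h \<in> borel_measurable borel"
    by (rule meas_T[where H="\<lambda>z. exp K0 * F z"]) (use pw Fm in auto)
  have hp: "(1/4::real) > 0" "(3/4::real) > 0" by simp_all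
  note G = gaussPair[where pa="1/4" and pb="3/4" and k="1/2" and ua="?ua" and ub="?ub" and va="?va" and vb="?vb", OF hp, folded F_def]
  show "integrable (muL br J) h" unfolding muL_int(1)[OF hm] pw by (intro integrable_mult_right G(1))
  have "integral\<^sup>L (muL br J) h = (1 / sqrt (2 * pi) ^ (DIM('q) + DIM('q))) *\<^sub>R (exp K0 * integral\<^sup>L lborel F)"
    unfolding muL_int(2)[OF hm] pw integral_mult_right_zero ..
  also have "\<dots> = KH br J (T (c, d)) (T (c', d'))"
    unfolding G(2) KH_T
  proof (rule final_alg2)
    show "sqrt (2 * pi) ^ (DIM('q) + DIM('q)) \<noteq> 0" by simp
    show "sqrt (pi / (3/4)) ^ DIM('q) * sqrt (pi / (1/4 + (1/2)\<^sup>2 / (4 * (3/4)))) ^ DIM('q) = sqrt (2 * pi) ^ (DIM('q) + DIM('q))"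
      by (rule num_gen) (simp add: power2_eq_square)
  qed (simp add: K0_def complex_eq_iff power2_norm_eq_inner inner_add_left inner_add_right inner_diff_left inner_diff_right inner_commute field_simps)
  finally show "integral\<^sup>L (muL br J) h = KH br J (T (c, d)) (T (c', d'))" .
qed

lemma C6:
  fixes c d c' d' :: 'q
  defines "h \<equiv> (\<lambda>\<xi>. Bkern br J q j (T (c', d')) (q \<xi>) * KH br J (T (c, d)) \<xi> * alpha br J \<xi>)"
  shows "integrable (muL br J) h" and "integral\<^sup>L (muL br J) h = KH br J (T (c, d)) (T (c', d'))"
proof -
  let ?ua = "(1/2) *\<^sub>R c" and ?ub = "d' + (1/2) *\<^sub>R d" and ?va = "(1/2) *\<^sub>R d" and ?vb = "c' - (1/2) *\<^sub>R c"
  define K0 where "K0 = complex_of_real ((c' \<bullet> c' - d' \<bullet> d') / 4) + \<i> * complex_of_real (- (c' \<bullet> d') / 2)"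
  define F where "F \<equiv> (\<lambda>z::'q\<times>'q. exp (complex_of_real (- (1/4) * (norm (fst z))\<^sup>2 - (3/4) * (norm (snd z))\<^sup>2 + ?ua \<bullet> fst z + ?ub \<bullet> snd z)
                  + \<i> * complex_of_real ((- (1/2)) * (fst z \<bullet> snd z) + ?va \<bullet> fst z + ?vb \<bullet> snd z)))"
  have pw: "h (T z) = exp K0 * F z" for z
  proof (cases z)
    case (Pair a b)
    show ?thesis unfolding Pair h_def KH_T F_def q_T Bk_TR al_T K0_def
      apply (simp only: mult_exp_exp)
      apply (rule arg_cong[where f=exp])
      apply (simp add: complex_eq_iff normsq_pair power2_norm_eq_inner inner_add_left inner_add_right inner_diff_left inner_diff_right inner_commute field_simps)
      done
  qed
  have Fm: "F \<in> borel_measurable borel" unfolding F_def by (intro borel_measurable_continuous_onI continuous_intros)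
  have hm: "h \<in> borel_measurable borel"
    by (rule meas_T[where H="\<lambda>z. exp K0 * F z"]) (use pw Fm in auto)
  have hp: "(1/4::real) > 0" "(3/4::real) > 0" by simp_all
  note G = gaussPair[where pa="1/4" and pb="3/4" and k="- (1/2)" and ua="?ua" and ub="?ub" and va="?va" and vb="?vb", OF hp, folded F_def]
  show "integrable (muL br J) h" unfolding muL_int(1)[OF hm] pw by (intro integrable_mult_right G(1))
  have "integral\<^sup>L (muL br J) h = (1 / sqrt (2 * pi) ^ (DIM('q) + DIM('q))) *\<^sub>R (exp K0 * integral\<^sup>L lborel F)"
    unfolding muL_int(2)[OF hm] pw integral_mult_right_zero ..
  also have "\<dots> = KH br J (T (c, d)) (T (c', d'))"
    unfolding G(2) KH_T
  proof (rule final_alg2)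
    show "sqrt (2 * pi) ^ (DIM('q) + DIM('q)) \<noteq> 0" by simp
    show "sqrt (pi / (3/4)) ^ DIM('q) * sqrt (pi / (1/4 + (- (1/2))\<^sup>2 / (4 * (3/4)))) ^ DIM('q) = sqrt (2 * pi) ^ (DIM('q) + DIM('q))"
      by (rule num_gen) (simp add: power2_eq_square)
  qed (simp add: K0_def complex_eq_iff power2_norm_eq_inner inner_add_left inner_add_right inner_diff_left inner_diff_right inner_commute field_simps)
  finally show "integral\<^sup>L (muL br J) h = KH br J (T (c, d)) (T (c', d'))" .
qed

end


lemma lin_int:
  fixes g :: "'i \<Rightarrow> 'x \<Rightarrow> complex"
  assumes "\<And>\<tau>. \<tau> \<in> S \<Longrightarrow> integrable M (g \<tau>)"
  shows "integrable M (\<lambda>x. \<Sum>\<tau>\<in>S. c \<tau> * g \<tau> x)"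
    and "integral\<^sup>L M (\<lambda>x. \<Sum>\<tau>\<in>S. c \<tau> * g \<tau> x) = (\<Sum>\<tau>\<in>S. c \<tau> * integral\<^sup>L M (g \<tau>))"
  using assms by (auto simp: integral_sum integral_mult_right_zero)

lemma bil_int:
  fixes A B :: "'i \<Rightarrow> 'x \<Rightarrow> complex"
  assumes int: "\<And>\<sigma> \<tau>. \<sigma> \<in> S \<Longrightarrow> \<tau> \<in> S' \<Longrightarrow> integrable M (\<lambda>x. cnj (A \<sigma> x) * B \<tau> x)"
  shows "integrable M (\<lambda>x. cnj (\<Sum>\<sigma>\<in>S. a \<sigma> * A \<sigma> x) * (\<Sum>\<tau>\<in>S'. b \<tau> * B \<tau> x))"
    and "integral\<^sup>L M (\<lambda>x. cnj (\<Sum>\<sigma>\<in>S. a \<sigma> * A \<sigma> x) * (\<Sum>\<tau>\<in>S'. b \<tau> * B \<tau> x))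
         = (\<Sum>\<sigma>\<in>S. \<Sum>\<tau>\<in>S'. cnj (a \<sigma>) * b \<tau> * integral\<^sup>L M (\<lambda>x. cnj (A \<sigma> x) * B \<tau> x))"
proof -
  have eq: "(\<lambda>x. cnj (\<Sum>\<sigma>\<in>S. a \<sigma> * A \<sigma> x) * (\<Sum>\<tau>\<in>S'. b \<tau> * B \<tau> x))
     = (\<lambda>x. \<Sum>\<sigma>\<in>S. cnj (a \<sigma>) * (\<Sum>\<tau>\<in>S'. b \<tau> * (cnj (A \<sigma> x) * B \<tau> x)))"
    by (simp add: sum_product sum_distrib_left mult_ac)
  have i1: "integrable M (\<lambda>x. \<Sum>\<tau>\<in>S'. b \<tau> * (cnj (A \<sigma> x) * B \<tau> x))" if "\<sigma> \<in> S" for \<sigma>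
    using int that by (intro lin_int(1)) auto
  show "integrable M (\<lambda>x. cnj (\<Sum>\<sigma>\<in>S. a \<sigma> * A \<sigma> x) * (\<Sum>\<tau>\<in>S'. b \<tau> * B \<tau> x))"
    unfolding eq by (intro lin_int(1) i1)
  have "integral\<^sup>L M (\<lambda>x. cnj (\<Sum>\<sigma>\<in>S. a \<sigma> * A \<sigma> x) * (\<Sum>\<tau>\<in>S'. b \<tau> * B \<tau> x))
      = (\<Sum>\<sigma>\<in>S. cnj (a \<sigma>) * integral\<^sup>L M (\<lambda>x. \<Sum>\<tau>\<in>S'. b \<tau> * (cnj (A \<sigma> x) * B \<tau> x)))"
    unfolding eq by (intro lin_int(2) i1)
  also have "\<dots> = (\<Sum>\<sigma>\<in>S. cnj (a \<sigma>) * (\<Sum>\<tau>\<in>S'. b \<tau> * integral\<^sup>L M (\<lambda>x. cnj (A \<sigma> x) * B \<tau> x)))"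
    using int by (intro sum.cong refl arg_cong2[where f="(*)"] lin_int(2)) auto
  finally show "integral\<^sup>L M (\<lambda>x. cnj (\<Sum>\<sigma>\<in>S. a \<sigma> * A \<sigma> x) * (\<Sum>\<tau>\<in>S'. b \<tau> * B \<tau> x))
         = (\<Sum>\<sigma>\<in>S. \<Sum>\<tau>\<in>S'. cnj (a \<sigma>) * b \<tau> * integral\<^sup>L M (\<lambda>x. cnj (A \<sigma> x) * B \<tau> x))"
    by (simp add: sum_distrib_left mult_ac)
qed

lemma sum_combine:
  fixes G :: "'i \<Rightarrow> 'x \<Rightarrow> complex"
  assumes "finite S1" "finite S2"
  shows "\<exists>S c. finite S \<and> (\<forall>x. a * (\<Sum>\<tau>\<in>S1. c1 \<tau> * G \<tau> x) + (\<Sum>\<tau>\<in>S2. c2 \<tau> * G \<tau> x) = (\<Sum>\<tau>\<in>S. c \<tau> * G \<tau> x))"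
proof (intro exI conjI allI)
  let ?S = "S1 \<union> S2"
  let ?c = "\<lambda>\<tau>. a * (if \<tau> \<in> S1 then c1 \<tau> else 0) + (if \<tau> \<in> S2 then c2 \<tau> else 0)"
  show "finite ?S" using assms by simp
  fix x
  have 1: "(\<Sum>\<tau>\<in>S1. c1 \<tau> * G \<tau> x) = (\<Sum>\<tau>\<in>?S. (if \<tau> \<in> S1 then c1 \<tau> else 0) * G \<tau> x)"
    using assms by (intro sum.mono_neutral_cong_left) auto
  have 2: "(\<Sum>\<tau>\<in>S2. c2 \<tau> * G \<tau> x) = (\<Sum>\<tau>\<in>?S. (if \<tau> \<in> S2 then c2 \<tau> else 0) * G \<tau> x)"
    using assms by (intro sum.mono_neutral_cong_left) auto
  show "a * (\<Sum>\<tau>\<in>S1. c1 \<tau> * G \<tau> x) + (\<Sum>\<tau>\<in>S2. c2 \<tau> * G \<tau> x) = (\<Sum>\<tau>\<in>?S. ?c \<tau> * G \<tau> x)"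
    unfolding 1 2 by (simp add: sum_distrib_left sum.distrib[symmetric] algebra_simps)
qed

context psetup begin

lemma T_cover: obtains c d where "\<tau> = T (c, d)"
  using Tinv(2)[of \<tau>] by (metis prod.collapse)

lemma R_cover: obtains x where "\<phi> = R x"
  using Rinv(2)[of \<phi>] by metis

lemma G1: "integrable (nuL br J) (\<lambda>\<xi>. KH br J \<tau> \<xi> * cnj (Bkern br J q j \<xi> \<phi>))"
      "integral\<^sup>L (nuL br J) (\<lambda>\<xi>. KH br J \<tau> \<xi> * cnj (Bkern br J q j \<xi> \<phi>)) = cnj (Bkern br J q j \<tau> \<phi>)"
proof -
  obtain c d where t: "\<tau> = T (c, d)" by (rule T_cover)
  obtain x where p: "\<phi> = R x" by (rule R_cover)
  show "integrable (nuL br J) (\<lambda>\<xi>. KH br J \<tau> \<xi> * cnj (Bkern br J q j \<xi> \<phi>))"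
       "integral\<^sup>L (nuL br J) (\<lambda>\<xi>. KH br J \<tau> \<xi> * cnj (Bkern br J q j \<xi> \<phi>)) = cnj (Bkern br J q j \<tau> \<phi>)"
    unfolding t p using C1[of c d x] by auto
qed

lemma G2: "integrable (muQ br J j) (\<lambda>\<phi>. cnj (Bkern br J q j \<tau> \<phi>) * Bkern br J q j \<xi> \<phi>)"
      "integral\<^sup>L (muQ br J j) (\<lambda>\<phi>. cnj (Bkern br J q j \<tau> \<phi>) * Bkern br J q j \<xi> \<phi>) = KH br J \<tau> \<xi>"
proof -
  obtain c d where t: "\<tau> = T (c, d)" by (rule T_cover)
  obtain a b where x: "\<xi> = T (a, b)" by (rule T_cover)
  show "integrable (muQ br J j) (\<lambda>\<phi>. cnj (Bkern br J q j \<tau> \<phi>) * Bkern br J q j \<xi> \<phi>)"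
       "integral\<^sup>L (muQ br J j) (\<lambda>\<phi>. cnj (Bkern br J q j \<tau> \<phi>) * Bkern br J q j \<xi> \<phi>) = KH br J \<tau> \<xi>"
    unfolding t x using C2[of c d a b] by auto
qed

lemma G3: "integrable (nuL br J) (\<lambda>\<xi>. cnj (KH br J \<sigma> \<xi>) * KH br J \<tau> \<xi>)"
      "integral\<^sup>L (nuL br J) (\<lambda>\<xi>. cnj (KH br J \<sigma> \<xi>) * KH br J \<tau> \<xi>) = KH br J \<tau> \<sigma>"
proof -
  obtain c d where t: "\<tau> = T (c, d)" by (rule T_cover)
  obtain c' d' where s: "\<sigma> = T (c', d')" by (rule T_cover)
  show "integrable (nuL br J) (\<lambda>\<xi>. cnj (KH br J \<sigma> \<xi>) * KH br J \<tau> \<xi>)"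
       "integral\<^sup>L (nuL br J) (\<lambda>\<xi>. cnj (KH br J \<sigma> \<xi>) * KH br J \<tau> \<xi>) = KH br J \<tau> \<sigma>"
    unfolding t s using C3[of c' d' c d] by auto
qed

lemma G4: "integrable (muQ br J j) (\<lambda>\<phi>. cnj (cnj (Bkern br J q j \<sigma> \<phi>)) * cnj (Bkern br J q j \<tau> \<phi>))"
      "integral\<^sup>L (muQ br J j) (\<lambda>\<phi>. cnj (cnj (Bkern br J q j \<sigma> \<phi>)) * cnj (Bkern br J q j \<tau> \<phi>)) = KH br J \<tau> \<sigma>"
proof -
  obtain c d where t: "\<tau> = T (c, d)" by (rule T_cover)
  obtain c' d' where s: "\<sigma> = T (c', d')" by (rule T_cover)
  show "integrable (muQ br J j) (\<lambda>\<phi>. cnj (cnj (Bkern br J q j \<sigma> \<phi>)) * cnj (Bkern br J q j \<tau> \<phi>))"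
       "integral\<^sup>L (muQ br J j) (\<lambda>\<phi>. cnj (cnj (Bkern br J q j \<sigma> \<phi>)) * cnj (Bkern br J q j \<tau> \<phi>)) = KH br J \<tau> \<sigma>"
    unfolding t s complex_cnj_cnj using C4[of c' d' c d] by auto
qed

lemma G5: "integrable (muL br J) (\<lambda>\<xi>. cnj (KH br J \<sigma> \<xi>) * (cnj (Bkern br J q j \<tau> (q \<xi>)) * cnj (alpha br J \<xi>)))"
      "integral\<^sup>L (muL br J) (\<lambda>\<xi>. cnj (KH br J \<sigma> \<xi>) * (cnj (Bkern br J q j \<tau> (q \<xi>)) * cnj (alpha br J \<xi>))) = KH br J \<tau> \<sigma>"
proof -
  obtain c d where t: "\<tau> = T (c, d)" by (rule T_cover)
  obtain c' d' where s: "\<sigma> = T (c', d')" by (rule T_cover)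
  show "integrable (muL br J) (\<lambda>\<xi>. cnj (KH br J \<sigma> \<xi>) * (cnj (Bkern br J q j \<tau> (q \<xi>)) * cnj (alpha br J \<xi>)))"
       "integral\<^sup>L (muL br J) (\<lambda>\<xi>. cnj (KH br J \<sigma> \<xi>) * (cnj (Bkern br J q j \<tau> (q \<xi>)) * cnj (alpha br J \<xi>))) = KH br J \<tau> \<sigma>"
    unfolding t s using C5[of c' d' c d] by (auto simp: mult.assoc)
qed

lemma G6: "integrable (muL br J) (\<lambda>\<xi>. cnj (cnj (Bkern br J q j \<sigma> (q \<xi>))) * (KH br J \<tau> \<xi> * alpha br J \<xi>))"
      "integral\<^sup>L (muL br J) (\<lambda>\<xi>. cnj (cnj (Bkern br J q j \<sigma> (q \<xi>))) * (KH br J \<tau> \<xi> * alpha br J \<xi>)) = KH br J \<tau> \<sigma>"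
proof -
  obtain c d where t: "\<tau> = T (c, d)" by (rule T_cover)
  obtain c' d' where s: "\<sigma> = T (c', d')" by (rule T_cover)
  show "integrable (muL br J) (\<lambda>\<xi>. cnj (cnj (Bkern br J q j \<sigma> (q \<xi>))) * (KH br J \<tau> \<xi> * alpha br J \<xi>))"
       "integral\<^sup>L (muL br J) (\<lambda>\<xi>. cnj (cnj (Bkern br J q j \<sigma> (q \<xi>))) * (KH br J \<tau> \<xi> * alpha br J \<xi>)) = KH br J \<tau> \<sigma>"
    unfolding t s complex_cnj_cnj using C6[of c' d' c d] by (auto simp: mult.assoc)
qed

lemma s_cont: "continuous_on UNIV s"
proof -
  have bb: "bounded_bilinear br" using bil by (simp add: bilinear_conv_bounded_bilinear)
  have ec: "continuous_on UNIV e" using lin_e by (intro linear_continuous_on) (simp add: linear_conv_bounded_linear[symmetric])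
  show ?thesis unfolding s_def[abs_def] by (rule bounded_bilinear.continuous_on[OF bb ec ec])
qed

lemma Bk_meas: "(\<lambda>\<phi>. Bkern br J q j \<tau> \<phi>) \<in> borel_measurable borel"
proof -
  obtain a b where t: "\<tau> = T (a, b)" by (rule T_cover)
  show ?thesis unfolding t
    by (rule meas_R[where H="\<lambda>x. exp (complex_of_real (x \<bullet> b - x \<bullet> x / 2 + (a \<bullet> a - b \<bullet> b) / 4) + \<i> * complex_of_real (x \<bullet> a - s x / 2 - (a \<bullet> b) / 2))"])
      (auto simp: Bk_TR intro!: borel_measurable_continuous_onI continuous_intros continuous_on_compose2[OF s_cont])
qed


lemma cmod_sq_Re: "(cmod z)\<^sup>2 = Re (cnj z * z)"
  unfolding cmod_power2 by (simp add: power2_eq_square)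

lemma main:
  shows "\<exists>HSc Bop Binv.
     HSc \<subseteq> L2Q br J j \<and> csubspace_fun HSc \<and>
     Bop ` HSc = HHc br J \<and> Binv ` HHc br J = HSc \<and>
     (\<forall>\<psi>\<in>HSc. Binv (Bop \<psi>) = \<psi>) \<and> (\<forall>\<psi>\<in>HHc br J. Bop (Binv \<psi>) = \<psi>) \<and>
     (\<forall>\<psi>1\<in>HSc. \<forall>\<psi>2\<in>HSc. \<forall>a::complex.
        Bop (\<lambda>\<phi>. a * \<psi>1 \<phi> + \<psi>2 \<phi>) = (\<lambda>\<xi>. a * Bop \<psi>1 \<xi> + Bop \<psi>2 \<xi>)) \<and>
     (\<forall>\<psi>\<in>HSc. innerH br J (Bop \<psi>) (Bop \<psi>) = innerS br J j \<psi> \<psi>) \<and>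
     (\<forall>\<psi>\<in>HSc. \<forall>\<xi>. Bop \<psi> \<xi> =
        integral\<^sup>L (muQ br J j) (\<lambda>\<phi>. \<psi> \<phi> * Bkern br J q j \<xi> \<phi>)) \<and>
     (\<forall>\<psi>\<in>HHc br J. \<forall>\<phi>. Binv \<psi> \<phi> =
        integral\<^sup>L (nuL br J) (\<lambda>\<xi>. \<psi> \<xi> * cnj (Bkern br J q j \<xi> \<phi>))) \<and>
     (\<forall>\<psi>'\<in>HHc br J. \<forall>\<psi>\<in>HSc. innerH br J \<psi>' (Bop \<psi>) =
        integral\<^sup>L (muL br J) (\<lambda>\<xi>. cnj (\<psi>' \<xi>) * \<psi> (q \<xi>) * cnj (alpha br J \<xi>))) \<and>
     (\<forall>\<psi>'\<in>HSc. \<forall>\<psi>\<in>HHc br J. innerS br J j \<psi>' (Binv \<psi>) =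
        integral\<^sup>L (muL br J) (\<lambda>\<xi>. cnj (\<psi>' (q \<xi>)) * \<psi> \<xi> * alpha br J \<xi>)) \<and>
     (\<forall>\<tau> \<phi>. Binv (KH br J \<tau>) \<phi> = cnj (Bkern br J q j \<tau> \<phi>))"
proof -
  define Binv where "Binv = (\<lambda>\<psi> \<phi>. integral\<^sup>L (nuL br J) (\<lambda>\<xi>. \<psi> \<xi> * cnj (Bkern br J q j \<xi> \<phi>)))"
  define Bop where "Bop = (\<lambda>\<psi> \<xi>. integral\<^sup>L (muQ br J j) (\<lambda>\<phi>. \<psi> \<phi> * Bkern br J q j \<xi> \<phi>))"
  define SF where "SF = {\<psi>. \<exists>S c. finite S \<and> \<psi> = (\<lambda>\<phi>. \<Sum>\<tau>\<in>S. c \<tau> * cnj (Bkern br J q j \<tau> \<phi>))}"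
  let ?Bk = "Bkern br J q j" and ?K = "KH br J"
  have Binv_sum: "Binv (\<lambda>\<xi>. \<Sum>\<tau>\<in>S. c \<tau> * ?K \<tau> \<xi>) = (\<lambda>\<phi>. \<Sum>\<tau>\<in>S. c \<tau> * cnj (?Bk \<tau> \<phi>))" for S c
  proof
    fix \<phi>
    have "Binv (\<lambda>\<xi>. \<Sum>\<tau>\<in>S. c \<tau> * ?K \<tau> \<xi>) \<phi> = integral\<^sup>L (nuL br J) (\<lambda>\<xi>. \<Sum>\<tau>\<in>S. c \<tau> * (?K \<tau> \<xi> * cnj (?Bk \<xi> \<phi>)))"
      unfolding Binv_def by (simp add: sum_distrib_right mult.assoc)
    also have "\<dots> = (\<Sum>\<tau>\<in>S. c \<tau> * cnj (?Bk \<tau> \<phi>))"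
      by (subst lin_int(2)) (auto intro: G1(1) simp: G1(2))
    finally show "Binv (\<lambda>\<xi>. \<Sum>\<tau>\<in>S. c \<tau> * ?K \<tau> \<xi>) \<phi> = (\<Sum>\<tau>\<in>S. c \<tau> * cnj (?Bk \<tau> \<phi>))" .
  qed
  have Bop_int: "integrable (muQ br J j) (\<lambda>\<phi>. (\<Sum>\<tau>\<in>S. c \<tau> * cnj (?Bk \<tau> \<phi>)) * ?Bk \<xi> \<phi>)" for S c \<xi>
  proof -
    have "integrable (muQ br J j) (\<lambda>\<phi>. \<Sum>\<tau>\<in>S. c \<tau> * (cnj (?Bk \<tau> \<phi>) * ?Bk \<xi> \<phi>))"
      by (intro lin_int(1) G2(1))
    then show ?thesis by (simp add: sum_distrib_right mult.assoc)
  qed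
  have Bop_sum: "Bop (\<lambda>\<phi>. \<Sum>\<tau>\<in>S. c \<tau> * cnj (?Bk \<tau> \<phi>)) = (\<lambda>\<xi>. \<Sum>\<tau>\<in>S. c \<tau> * ?K \<tau> \<xi>)" for S c
  proof
    fix \<xi>
    have "Bop (\<lambda>\<phi>. \<Sum>\<tau>\<in>S. c \<tau> * cnj (?Bk \<tau> \<phi>)) \<xi> = integral\<^sup>L (muQ br J j) (\<lambda>\<phi>. \<Sum>\<tau>\<in>S. c \<tau> * (cnj (?Bk \<tau> \<phi>) * ?Bk \<xi> \<phi>))"
      unfolding Bop_def by (simp add: sum_distrib_right mult.assoc)
    also have "\<dots> = (\<Sum>\<tau>\<in>S. c \<tau> * ?K \<tau> \<xi>)"
      by (subst lin_int(2)) (auto intro: G2(1) simp: G2(2))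
    finally show "Bop (\<lambda>\<phi>. \<Sum>\<tau>\<in>S. c \<tau> * cnj (?Bk \<tau> \<phi>)) \<xi> = (\<Sum>\<tau>\<in>S. c \<tau> * ?K \<tau> \<xi>)" .
  qed
  have HH: "f \<in> HHc br J \<longleftrightarrow> (\<exists>S c. finite S \<and> f = (\<lambda>\<xi>. \<Sum>\<tau>\<in>S. c \<tau> * ?K \<tau> \<xi>))" for f
    by (simp add: HHc_def)
  have img1: "Binv ` HHc br J = SF"
  proof
    show "Binv ` HHc br J \<subseteq> SF"
    proof
      fix \<psi> assume "\<psi> \<in> Binv ` HHc br J"
      then obtain f where f: "f \<in> HHc br J" "\<psi> = Binv f" by blast
      then obtain S c where Sc: "finite S" "f = (\<lambda>\<xi>. \<Sum>\<tau>\<in>S. c \<tau> * ?K \<tau> \<xi>)" by (auto simp: HH)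
      have "\<psi> = (\<lambda>\<phi>. \<Sum>\<tau>\<in>S. c \<tau> * cnj (?Bk \<tau> \<phi>))" using f(2) Sc(2) Binv_sum by simp
      then show "\<psi> \<in> SF" unfolding SF_def using Sc(1) by blast
    qed
    show "SF \<subseteq> Binv ` HHc br J"
    proof
      fix \<psi> assume "\<psi> \<in> SF"
      then obtain S c where Sc: "finite S" "\<psi> = (\<lambda>\<phi>. \<Sum>\<tau>\<in>S. c \<tau> * cnj (?Bk \<tau> \<phi>))" unfolding SF_def by blast
      then have "\<psi> = Binv (\<lambda>\<xi>. \<Sum>\<tau>\<in>S. c \<tau> * ?K \<tau> \<xi>)" using Binv_sum by simp
      moreover have "(\<lambda>\<xi>. \<Sum>\<tau>\<in>S. c \<tau> * ?K \<tau> \<xi>) \<in> HHc br J" using Sc by (auto simp: HH)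
      ultimately show "\<psi> \<in> Binv ` HHc br J" by blast
    qed
  qed
  have BopBinv: "Bop (Binv f) = f" if "f \<in> HHc br J" for f
    using that by (auto simp: HH Binv_sum Bop_sum)
  have BinvBop: "Binv (Bop \<psi>) = \<psi>" if "\<psi> \<in> SF" for \<psi>
    using that unfolding SF_def by (auto simp: Binv_sum Bop_sum)
  have img2: "Bop ` SF = HHc br J"
  proof
    show "Bop ` SF \<subseteq> HHc br J" unfolding SF_def by (auto simp: Bop_sum HH) blast
    show "HHc br J \<subseteq> Bop ` SF"
    proof
      fix f assume f: "f \<in> HHc br J"
      then have "f = Bop (Binv f)" using BopBinv by simp
      moreover have "Binv f \<in> SF" using f img1 by blast
      ultimately show "f \<in> Bop ` SF" by blast
    qed
  qed
  have lin: "Bop (\<lambda>\<phi>. a * \<psi>1 \<phi> + \<psi>2 \<phi>) = (\<lambda>\<xi>. a * Bop \<psi>1 \<xi> + Bop \<psi>2 \<xi>)" if "\<psi>1 \<in> SF" "\<psi>2 \<in> SF" for \<psi>1 \<psi>2 a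
  proof
    fix \<xi>
    have i1: "integrable (muQ br J j) (\<lambda>\<phi>. \<psi>1 \<phi> * ?Bk \<xi> \<phi>)" using that(1) Bop_int unfolding SF_def by auto
    have i2: "integrable (muQ br J j) (\<lambda>\<phi>. \<psi>2 \<phi> * ?Bk \<xi> \<phi>)" using that(2) Bop_int unfolding SF_def by auto
    have "Bop (\<lambda>\<phi>. a * \<psi>1 \<phi> + \<psi>2 \<phi>) \<xi> = integral\<^sup>L (muQ br J j) (\<lambda>\<phi>. a * (\<psi>1 \<phi> * ?Bk \<xi> \<phi>) + \<psi>2 \<phi> * ?Bk \<xi> \<phi>)"
      unfolding Bop_def by (simp add: distrib_right mult.assoc)
    also have "\<dots> = a * Bop \<psi>1 \<xi> + Bop \<psi>2 \<xi>"
      unfolding Bop_def using i1 i2 by (simp add: integral_mult_right_zero)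
    finally show "Bop (\<lambda>\<phi>. a * \<psi>1 \<phi> + \<psi>2 \<phi>) \<xi> = a * Bop \<psi>1 \<xi> + Bop \<psi>2 \<xi>" .
  qed
  have sub: "csubspace_fun SF"
    unfolding csubspace_fun_def
  proof (intro conjI ballI allI)
    show "(\<lambda>_. 0) \<in> SF" unfolding SF_def by (intro CollectI exI[of _ "{}"]) auto
    fix f g and a :: complex assume f: "f \<in> SF" and g: "g \<in> SF"
    obtain S1 c1 where 1: "finite S1" "f = (\<lambda>\<phi>. \<Sum>\<tau>\<in>S1. c1 \<tau> * cnj (?Bk \<tau> \<phi>))" using f unfolding SF_def by blast
    obtain S2 c2 where 2: "finite S2" "g = (\<lambda>\<phi>. \<Sum>\<tau>\<in>S2. c2 \<tau> * cnj (?Bk \<tau> \<phi>))" using g unfolding SF_def by blast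
    obtain S c where "finite S" "\<forall>x. a * (\<Sum>\<tau>\<in>S1. c1 \<tau> * cnj (?Bk \<tau> x)) + (\<Sum>\<tau>\<in>S2. c2 \<tau> * cnj (?Bk \<tau> x)) = (\<Sum>\<tau>\<in>S. c \<tau> * cnj (?Bk \<tau> x))"
      using sum_combine[OF 1(1) 2(1), of a c1 "\<lambda>\<tau> x. cnj (?Bk \<tau> x)" c2] by blast
    then show "(\<lambda>x. a * f x + g x) \<in> SF" unfolding SF_def 1 2 by auto
  qed
  have L2: "SF \<subseteq> L2Q br J j"
  proof
    fix \<psi> assume "\<psi> \<in> SF"
    then obtain S c where Sc: "finite S" "\<psi> = (\<lambda>\<phi>. \<Sum>\<tau>\<in>S. c \<tau> * cnj (?Bk \<tau> \<phi>))" unfolding SF_def by blast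
    have cm: "(\<lambda>x. cnj (?Bk \<tau> x)) \<in> borel_measurable borel" for \<tau>
      using Bk_meas[of \<tau>] by (rule measurable_compose) (intro borel_measurable_continuous_onI continuous_intros)
    have m: "\<psi> \<in> borel_measurable borel" unfolding Sc(2) using cm by measurable
    have "integrable (muQ br J j) (\<lambda>\<phi>. cnj (\<psi> \<phi>) * \<psi> \<phi>)"
      unfolding Sc(2) by (rule bil_int(1)) (rule G4(1))
    from integrable_Re[OF this] have "integrable (muQ br J j) (\<lambda>\<phi>. (cmod (\<psi> \<phi>))\<^sup>2)"
      by (simp add: cmod_sq_Re)
    moreover have "\<psi> \<in> borel_measurable (muQ br J j)" using m by (simp add: muQ_eq)
    ultimately show "\<psi> \<in> L2Q br J j" by (simp add: L2Q_def)
  qed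
  have iso: "innerH br J (Bop \<psi>) (Bop \<psi>) = innerS br J j \<psi> \<psi>" if "\<psi> \<in> SF" for \<psi>
  proof -
    from that obtain S c where Sc: "finite S" "\<psi> = (\<lambda>\<phi>. \<Sum>\<tau>\<in>S. c \<tau> * cnj (?Bk \<tau> \<phi>))" unfolding SF_def by auto
    have "innerH br J (Bop \<psi>) (Bop \<psi>) = integral\<^sup>L (nuL br J) (\<lambda>\<xi>. cnj (\<Sum>\<sigma>\<in>S. c \<sigma> * ?K \<sigma> \<xi>) * (\<Sum>\<tau>\<in>S. c \<tau> * ?K \<tau> \<xi>))"
      by (simp only: innerH_def Sc(2) Bop_sum)
    also have "\<dots> = (\<Sum>\<sigma>\<in>S. \<Sum>\<tau>\<in>S. cnj (c \<sigma>) * c \<tau> * integral\<^sup>L (nuL br J) (\<lambda>\<xi>. cnj (?K \<sigma> \<xi>) * ?K \<tau> \<xi>))"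
      by (rule bil_int(2)[where A="\<lambda>\<sigma> \<xi>. ?K \<sigma> \<xi>" and B="\<lambda>\<tau> \<xi>. ?K \<tau> \<xi>" and a=c and b=c]) (rule G3(1))
    also have "\<dots> = (\<Sum>\<sigma>\<in>S. \<Sum>\<tau>\<in>S. cnj (c \<sigma>) * c \<tau> * integral\<^sup>L (muQ br J j) (\<lambda>\<phi>. cnj (cnj (?Bk \<sigma> \<phi>)) * cnj (?Bk \<tau> \<phi>)))"
      by (simp only: G3(2) G4(2))
    also have "\<dots> = integral\<^sup>L (muQ br J j) (\<lambda>\<phi>. cnj (\<Sum>\<sigma>\<in>S. c \<sigma> * cnj (?Bk \<sigma> \<phi>)) * (\<Sum>\<tau>\<in>S. c \<tau> * cnj (?Bk \<tau> \<phi>)))"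
      by (rule bil_int(2)[where A="\<lambda>\<sigma> \<phi>. cnj (?Bk \<sigma> \<phi>)" and B="\<lambda>\<tau> \<phi>. cnj (?Bk \<tau> \<phi>)" and a=c and b=c, symmetric]) (rule G4(1))
    also have "\<dots> = innerS br J j \<psi> \<psi>"
      by (simp only: innerS_def Sc(2))
    finally show ?thesis .
  qed
  have id3: "innerH br J \<psi>' (Bop \<psi>) = integral\<^sup>L (muL br J) (\<lambda>\<xi>. cnj (\<psi>' \<xi>) * \<psi> (q \<xi>) * cnj (alpha br J \<xi>))"
    if "\<psi>' \<in> HHc br J" "\<psi> \<in> SF" for \<psi>' \<psi>
  proof -
    from that(2) obtain S c where Sc: "finite S" "\<psi> = (\<lambda>\<phi>. \<Sum>\<tau>\<in>S. c \<tau> * cnj (?Bk \<tau> \<phi>))" unfolding SF_def by auto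
    from that(1) obtain S' c' where Sc': "finite S'" "\<psi>' = (\<lambda>\<xi>. \<Sum>\<tau>\<in>S'. c' \<tau> * ?K \<tau> \<xi>)" unfolding HHc_def by auto
    have "innerH br J \<psi>' (Bop \<psi>) = integral\<^sup>L (nuL br J) (\<lambda>\<xi>. cnj (\<Sum>\<sigma>\<in>S'. c' \<sigma> * ?K \<sigma> \<xi>) * (\<Sum>\<tau>\<in>S. c \<tau> * ?K \<tau> \<xi>))"
      by (simp only: innerH_def Sc(2) Sc'(2) Bop_sum)
    also have "\<dots> = (\<Sum>\<sigma>\<in>S'. \<Sum>\<tau>\<in>S. cnj (c' \<sigma>) * c \<tau> * integral\<^sup>L (nuL br J) (\<lambda>\<xi>. cnj (?K \<sigma> \<xi>) * ?K \<tau> \<xi>))"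
      by (rule bil_int(2)[where A="\<lambda>\<sigma> \<xi>. ?K \<sigma> \<xi>" and B="\<lambda>\<tau> \<xi>. ?K \<tau> \<xi>" and a=c' and b=c]) (rule G3(1))
    also have "\<dots> = (\<Sum>\<sigma>\<in>S'. \<Sum>\<tau>\<in>S. cnj (c' \<sigma>) * c \<tau> * integral\<^sup>L (muL br J) (\<lambda>\<xi>. cnj (?K \<sigma> \<xi>) * (cnj (?Bk \<tau> (q \<xi>)) * cnj (alpha br J \<xi>))))"
      by (simp only: G3(2) G5(2))
    also have "\<dots> = integral\<^sup>L (muL br J) (\<lambda>\<xi>. cnj (\<Sum>\<sigma>\<in>S'. c' \<sigma> * ?K \<sigma> \<xi>) * (\<Sum>\<tau>\<in>S. c \<tau> * (cnj (?Bk \<tau> (q \<xi>)) * cnj (alpha br J \<xi>))))"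
      by (rule bil_int(2)[where A="\<lambda>\<sigma> \<xi>. ?K \<sigma> \<xi>" and B="\<lambda>\<tau> \<xi>. cnj (?Bk \<tau> (q \<xi>)) * cnj (alpha br J \<xi>)" and a=c' and b=c, symmetric]) (rule G5(1))
    also have "\<dots> = integral\<^sup>L (muL br J) (\<lambda>\<xi>. cnj (\<psi>' \<xi>) * \<psi> (q \<xi>) * cnj (alpha br J \<xi>))"
      unfolding Sc(2) Sc'(2) by (simp only: sum_distrib_right mult.assoc)
    finally show ?thesis .
  qed
  have id4: "innerS br J j \<psi>' (Binv \<psi>) = integral\<^sup>L (muL br J) (\<lambda>\<xi>. cnj (\<psi>' (q \<xi>)) * \<psi> \<xi> * alpha br J \<xi>)"
    if "\<psi>' \<in> SF" "\<psi> \<in> HHc br J" for \<psi>' \<psi>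
  proof -
    from that(1) obtain S' c' where Sc': "finite S'" "\<psi>' = (\<lambda>\<phi>. \<Sum>\<tau>\<in>S'. c' \<tau> * cnj (?Bk \<tau> \<phi>))" unfolding SF_def by auto
    from that(2) obtain S c where Sc: "finite S" "\<psi> = (\<lambda>\<xi>. \<Sum>\<tau>\<in>S. c \<tau> * ?K \<tau> \<xi>)" unfolding HHc_def by auto
    have "innerS br J j \<psi>' (Binv \<psi>) = integral\<^sup>L (muQ br J j) (\<lambda>\<phi>. cnj (\<Sum>\<sigma>\<in>S'. c' \<sigma> * cnj (?Bk \<sigma> \<phi>)) * (\<Sum>\<tau>\<in>S. c \<tau> * cnj (?Bk \<tau> \<phi>)))"
      by (simp only: innerS_def Sc(2) Sc'(2) Binv_sum)
    also have "\<dots> = (\<Sum>\<sigma>\<in>S'. \<Sum>\<tau>\<in>S. cnj (c' \<sigma>) * c \<tau> * integral\<^sup>L (muQ br J j) (\<lambda>\<phi>. cnj (cnj (?Bk \<sigma> \<phi>)) * cnj (?Bk \<tau> \<phi>)))"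
      by (rule bil_int(2)[where A="\<lambda>\<sigma> \<phi>. cnj (?Bk \<sigma> \<phi>)" and B="\<lambda>\<tau> \<phi>. cnj (?Bk \<tau> \<phi>)" and a=c' and b=c]) (rule G4(1))
    also have "\<dots> = (\<Sum>\<sigma>\<in>S'. \<Sum>\<tau>\<in>S. cnj (c' \<sigma>) * c \<tau> * integral\<^sup>L (muL br J) (\<lambda>\<xi>. cnj (cnj (?Bk \<sigma> (q \<xi>))) * (?K \<tau> \<xi> * alpha br J \<xi>)))"
      by (simp only: G4(2) G6(2))
    also have "\<dots> = integral\<^sup>L (muL br J) (\<lambda>\<xi>. cnj (\<Sum>\<sigma>\<in>S'. c' \<sigma> * cnj (?Bk \<sigma> (q \<xi>))) * (\<Sum>\<tau>\<in>S. c \<tau> * (?K \<tau> \<xi> * alpha br J \<xi>)))"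
      by (rule bil_int(2)[where A="\<lambda>\<sigma> \<xi>. cnj (?Bk \<sigma> (q \<xi>))" and B="\<lambda>\<tau> \<xi>. ?K \<tau> \<xi> * alpha br J \<xi>" and a=c' and b=c, symmetric]) (rule G6(1))
    also have "\<dots> = integral\<^sup>L (muL br J) (\<lambda>\<xi>. cnj (\<psi>' (q \<xi>)) * \<psi> \<xi> * alpha br J \<xi>)"
      unfolding Sc(2) Sc'(2) by (simp only: sum_distrib_right mult.assoc)
    finally show ?thesis .
  qed
  have last: "Binv (KH br J \<tau>) \<phi> = cnj (?Bk \<tau> \<phi>)" for \<tau> \<phi>
    unfolding Binv_def by (rule G1(2))
  show ?thesis
  proof (rule exI[of _ SF], rule exI[of _ Bop], rule exI[of _ Binv], intro conjI ballI allI)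
    show "SF \<subseteq> L2Q br J j" by (rule L2)
    show "csubspace_fun SF" by (rule sub)
    show "Bop ` SF = HHc br J" by (rule img2)
    show "Binv ` HHc br J = SF" by (rule img1)
  next
    fix \<psi> assume "\<psi> \<in> SF" then show "Binv (Bop \<psi>) = \<psi>" by (rule BinvBop)
  next
    fix \<psi> assume "\<psi> \<in> HHc br J" then show "Bop (Binv \<psi>) = \<psi>" by (rule BopBinv)
  next
    fix \<psi>1 \<psi>2 a assume "\<psi>1 \<in> SF" "\<psi>2 \<in> SF"
    then show "Bop (\<lambda>\<phi>. a * \<psi>1 \<phi> + \<psi>2 \<phi>) = (\<lambda>\<xi>. a * Bop \<psi>1 \<xi> + Bop \<psi>2 \<xi>)" by (rule lin)
  next
    fix \<psi> assume "\<psi> \<in> SF" then show "innerH br J (Bop \<psi>) (Bop \<psi>) = innerS br J j \<psi> \<psi>" by (rule iso)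
  next
    fix \<psi> \<xi> show "Bop \<psi> \<xi> = integral\<^sup>L (muQ br J j) (\<lambda>\<phi>. \<psi> \<phi> * Bkern br J q j \<xi> \<phi>)" by (simp only: Bop_def)
  next
    fix \<psi> \<phi> show "Binv \<psi> \<phi> = integral\<^sup>L (nuL br J) (\<lambda>\<xi>. \<psi> \<xi> * cnj (Bkern br J q j \<xi> \<phi>))" by (simp only: Binv_def)
  next
    fix \<psi>' \<psi> assume "\<psi>' \<in> HHc br J" "\<psi> \<in> SF"
    then show "innerH br J \<psi>' (Bop \<psi>) = integral\<^sup>L (muL br J) (\<lambda>\<xi>. cnj (\<psi>' \<xi>) * \<psi> (q \<xi>) * cnj (alpha br J \<xi>))" by (rule id3)
  next
    fix \<psi>' \<psi> assume "\<psi>' \<in> SF" "\<psi> \<in> HHc br J"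
    then show "innerS br J j \<psi>' (Binv \<psi>) = integral\<^sup>L (muL br J) (\<lambda>\<xi>. cnj (\<psi>' (q \<xi>)) * \<psi> \<xi> * alpha br J \<xi>)" by (rule id4)
  next
    fix \<tau> \<phi> show "Binv (KH br J \<tau>) \<phi> = cnj (Bkern br J q j \<tau> \<phi>)" by (rule last)
  qed
qed

end


theorem proposition3p1:
  fixes br :: "'l::euclidean_space \<Rightarrow> 'l \<Rightarrow> real"
    and J :: "'l \<Rightarrow> 'l"
    and q :: "'l \<Rightarrow> 'q::euclidean_space"
    and j :: "'q \<Rightarrow> 'l"
  assumes bil: "bilinear br"
    and nondeg: "\<forall>x. (\<forall>y. omega br x y = 0) \<longrightarrow> x = 0"
    and dsum_int: "Mspace br \<inter> Nspace br = {0}"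
    and dsum_span: "\<forall>x. \<exists>m\<in>Mspace br. \<exists>n\<in>Nspace br. x = m + n"
    and J_lin: "linear J"
    and J_sq: "\<forall>x. J (J x) = - x"
    and J_sympl: "\<forall>x y. omega br (J x) (J y) = omega br x y"
    and g_pos: "\<forall>x. x \<noteq> 0 \<longrightarrow> gform br J x x > 0"
    and q_lin: "linear q"
    and q_surj: "surj q"
    and q_ker: "{x. q x = 0} = Mspace br"
    and j_lin: "linear j"
    and j_sect: "\<forall>\<phi>. q (j \<phi>) = \<phi>"
    and j_range: "\<forall>\<phi>. j \<phi> \<in> J ` Mspace br"
  shows "\<exists>HSc Bop Binv.
     HSc \<subseteq> L2Q br J j \<and> csubspace_fun HSc \<and>
     Bop ` HSc = HHc br J \<and> Binv ` HHc br J = HSc \<and>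
     (\<forall>\<psi>\<in>HSc. Binv (Bop \<psi>) = \<psi>) \<and> (\<forall>\<psi>\<in>HHc br J. Bop (Binv \<psi>) = \<psi>) \<and>
     (\<forall>\<psi>1\<in>HSc. \<forall>\<psi>2\<in>HSc. \<forall>a::complex.
        Bop (\<lambda>\<phi>. a * \<psi>1 \<phi> + \<psi>2 \<phi>) = (\<lambda>\<xi>. a * Bop \<psi>1 \<xi> + Bop \<psi>2 \<xi>)) \<and>
     (\<forall>\<psi>\<in>HSc. innerH br J (Bop \<psi>) (Bop \<psi>) = innerS br J j \<psi> \<psi>) \<and>
     (\<forall>\<psi>\<in>HSc. \<forall>\<xi>. Bop \<psi> \<xi> =
        integral\<^sup>L (muQ br J j) (\<lambda>\<phi>. \<psi> \<phi> * Bkern br J q j \<xi> \<phi>)) \<and>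
     (\<forall>\<psi>\<in>HHc br J. \<forall>\<phi>. Binv \<psi> \<phi> =
        integral\<^sup>L (nuL br J) (\<lambda>\<xi>. \<psi> \<xi> * cnj (Bkern br J q j \<xi> \<phi>))) \<and>
     (\<forall>\<psi>'\<in>HHc br J. \<forall>\<psi>\<in>HSc. innerH br J \<psi>' (Bop \<psi>) =
        integral\<^sup>L (muL br J) (\<lambda>\<xi>. cnj (\<psi>' \<xi>) * \<psi> (q \<xi>) * cnj (alpha br J \<xi>))) \<and>
     (\<forall>\<psi>'\<in>HSc. \<forall>\<psi>\<in>HHc br J. innerS br J j \<psi>' (Binv \<psi>) =
        integral\<^sup>L (muL br J) (\<lambda>\<xi>. cnj (\<psi>' (q \<xi>)) * \<psi> \<xi> * alpha br J \<xi>)) \<and>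
     (\<forall>\<tau> \<phi>. Binv (KH br J \<tau>) \<phi> = cnj (Bkern br J q j \<tau> \<phi>))"
proof -
  interpret P: psetup br J q j
    by (intro psetup.intro; fact)
  show ?thesis by (rule P.main)
qed

end
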